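(* Let $X$ have a pdf $f$ satisfying Conditions (A) and (B) below, and fix the zero-wait sampler. For $\delta>0$ let $D_\delta=D(Q_{\mathrm{uni}}^\delta)$. Then the uniform quantizer is asymptotically optimal: $$\lim_{\delta\to0}\Big[\mathrm{AoI}(S_{\mathrm z},Q_{\mathrm{uni}}^\delta,F^* )-\inf_{Q:\,D(Q)\le D_\delta}\mathrm{AoI}(S_{\mathrm z},Q,F^* )\Big]=0.$$
   Context: Let $X$ be a real random variable with pdf $f$. Condition (A): $f$ is continuous and differentiable, and its support is a bounded interval $I$. Condition (B): $\int_I f\log_2^2 f\,dx$ and $-\int_I f\log_2 f\,dx$ exist and are finite. Quantizers. A quantizer $Q$ partitions $I$ into intervals $[a_{i-1},a_i]$ with representation points $c_i$. Write $p_i=P(X\in[a_{i-1},a_i])$. The mean-squared distortion is $D(Q)=\sum_i\int_{a_{i-1}}^{a_i}(x-c_i)^2f(x)\,dx$. The uniform quantizer $Q_{\mathrm{uni}}^\delta$ partitions $I$ into consecutive cells of length $\delta$, with midpoint representation points. Codes. A real-valued code assigns lengths $l_i\in\mathbb R^+$ to the cells, subject to $\sum_i2^{-l_i}\le1$. The random codeword length is $L=l_i$ when $X$ is in cell $i$. Objective. Under the zero-wait sampler $S_{\mathrm z}$, the AoI is $\mathrm{AoI}(S_{\mathrm z},Q,l)=\frac{E[L^2]}{2E[L]}+E[L]$. We write $\mathrm{AoI}(S_{\mathrm z},Q,F^* )=\inf_l \mathrm{AoI}(S_{\mathrm z},Q,l)$, the infimum over real-valued codes for $Q$. *)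

theory Defs
  imports "HOL-Analysis.Analysis"
begin

text \<open>A (scalar) quantizer of the interval [lo, hi] is represented by a triple (n, a, c):
  n cells, boundaries a 0 = lo < a 1 < ... < a n = hi, cell i (1 <= i <= n) is
  [a (i-1), a i] with representation point c i.\<close>

type_synonym quantizer = "nat \<times> (nat \<Rightarrow> real) \<times> (nat \<Rightarrow> real)"

definition is_quantizer :: "real \<Rightarrow> real \<Rightarrow> quantizer \<Rightarrow> bool" where
  "is_quantizer lo hi Q = (case Q of (n, a, c) \<Rightarrow>
     n \<ge> 1 \<and> a 0 = lo \<and> a n = hi \<and> (\<forall>i<n. a i < a (Suc i)))"

definition qcells :: "quantizer \<Rightarrow> nat" where
  "qcells Q = fst Q"

definition qbound :: "quantizer \<Rightarrow> nat \<Rightarrow> real" where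
  "qbound Q = fst (snd Q)"

definition qrep :: "quantizer \<Rightarrow> nat \<Rightarrow> real" where
  "qrep Q = snd (snd Q)"

definition cell_prob :: "(real \<Rightarrow> real) \<Rightarrow> quantizer \<Rightarrow> nat \<Rightarrow> real" where
  "cell_prob f Q i = integral {qbound Q (i - 1)..qbound Q i} f"

definition distortion :: "(real \<Rightarrow> real) \<Rightarrow> quantizer \<Rightarrow> real" where
  "distortion f Q = (\<Sum>i=1..qcells Q.
     integral {qbound Q (i - 1)..qbound Q i} (\<lambda>x. (x - qrep Q i)^2 * f x))"

definition uniform_quantizer :: "real \<Rightarrow> real \<Rightarrow> real \<Rightarrow> quantizer" where
  "uniform_quantizer lo hi \<delta> =
     (let n = nat \<lceil>(hi - lo) / \<delta>\<rceil>;
          a = (\<lambda>i. min (lo + real i * \<delta>) hi)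
      in (n, a, (\<lambda>i. (a (i - 1) + a i) / 2)))"

definition is_real_code :: "quantizer \<Rightarrow> (nat \<Rightarrow> real) \<Rightarrow> bool" where
  "is_real_code Q l = ((\<forall>i\<in>{1..qcells Q}. l i > 0) \<and>
                       (\<Sum>i=1..qcells Q. 2 powr (- l i)) \<le> 1)"

definition EL :: "(real \<Rightarrow> real) \<Rightarrow> quantizer \<Rightarrow> (nat \<Rightarrow> real) \<Rightarrow> real" where
  "EL f Q l = (\<Sum>i=1..qcells Q. cell_prob f Q i * l i)"

definition EL2 :: "(real \<Rightarrow> real) \<Rightarrow> quantizer \<Rightarrow> (nat \<Rightarrow> real) \<Rightarrow> real" where
  "EL2 f Q l = (\<Sum>i=1..qcells Q. cell_prob f Q i * (l i)^2)"

definition aoi_zw :: "(real \<Rightarrow> real) \<Rightarrow> quantizer \<Rightarrow> (nat \<Rightarrow> real) \<Rightarrow> real" where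
  "aoi_zw f Q l = EL2 f Q l / (2 * EL f Q l) + EL f Q l"

definition aoi_opt :: "(real \<Rightarrow> real) \<Rightarrow> quantizer \<Rightarrow> real" where
  "aoi_opt f Q = Inf {aoi_zw f Q l | l. is_real_code Q l}"

end

theory Submission
  imports Defs
begin

lemma tangent_ln:
  fixes t s :: real assumes "t \<ge> 0" "s > 0"
  shows "t * ln t \<ge> t * ln s + t - s"
proof (cases "t = 0")
  case True then show ?thesis using assms by simp
next
  case False
  then have tp: "t > 0" using assms by simp
  have "ln (s/t) \<le> s/t - 1" using ln_le_minus_one[of "s/t"] tp assms by simp
  then have "t * ln (s/t) \<le> t * (s/t - 1)" using tp by (simp add: mult_left_mono)
  also have "\<dots> = s - t" using tp by (simp add: field_simps)
  finally show ?thesis using tp assms by (simp add: ln_div algebra_simps)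
qed

lemma plnK_le:
  fixes p K :: real assumes "p > 0" "K > 0"
  shows "p * ln (K/p) \<le> K / exp 1"
proof -
  have y: "K/p > 0" using assms by simp
  have "ln (K/p / exp 1) \<le> K/p/exp 1 - 1" using ln_le_minus_one[of "K/p/exp 1"] y by (simp only: divide_pos_pos exp_gt_zero)
  moreover have "ln (K/p / exp 1) = ln (K/p) - 1" using ln_div[of "K/p" "exp 1"] y assms by simp
  ultimately have "ln (K/p) \<le> K/p/exp 1" by simp
  then have "p * ln (K/p) \<le> p * (K/p/exp 1)" using assms by (intro mult_left_mono) auto
  also have "p * (K/p/exp 1) = K / exp 1" using assms by simp
  finally show ?thesis .
qed

lemma poly_int:
  fixes a b c :: real assumes "a \<le> b"
  shows "((\<lambda>x. (x - c)^2) has_integral ((b-c)^3 - (a-c)^3)/3) {a..b}"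
proof -
  have "\<And>x. x \<in> {a..b} \<Longrightarrow> ((\<lambda>x. (x-c)^3/3) has_vector_derivative (x-c)^2) (at x within {a..b})"
    by (auto intro!: derivative_eq_intros simp: has_real_derivative_iff_has_vector_derivative[symmetric])
  from fundamental_theorem_of_calculus[OF assms this] show ?thesis by (simp add: diff_divide_distrib)
qed

lemma poly_ge: fixes a b c :: real assumes "a \<le> b"
  shows "((b-c)^3 - (a-c)^3)/3 \<ge> (b-a)^3/12"
proof -
  have "4*((b-c)^3 - (a-c)^3) - (b-a)^3 = 3*(b-a) * (a+b-2*c)^2"
    by (simp add: power3_eq_cube power2_eq_square algebra_simps)
  moreover have "3*(b-a) * (a+b-2*c)^2 \<ge> 0" using assms by simp
  ultimately show ?thesis by linarith
qed

lemma arctan_int: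
  fixes a b c s :: real assumes "a \<le> b" "s > 0"
  shows "((\<lambda>x. 1 / (s * (1 + ((x - c)/s)^2))) has_integral (arctan ((b-c)/s) - arctan ((a-c)/s))) {a..b}"
proof -
  have "\<And>x. x \<in> {a..b} \<Longrightarrow> ((\<lambda>x. arctan ((x-c)/s)) has_vector_derivative 1 / (s * (1 + ((x - c)/s)^2))) (at x within {a..b})"
    unfolding has_real_derivative_iff_has_vector_derivative[symmetric]
  proof -
    fix x assume "x \<in> {a..b}"
    have pos: "1 + ((x - c)/s)^2 > 0" by (simp add: add_pos_nonneg)
    have sp: "s > 0" "s \<noteq> 0" using assms by auto
    show "((\<lambda>x. arctan ((x-c)/s)) has_real_derivative 1 / (s * (1 + ((x - c)/s)^2))) (at x within {a..b})"
    proof -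
      have d1: "((\<lambda>x. (x-c)/s) has_real_derivative 1/s) (at x within {a..b})"
        using sp by (auto intro!: derivative_eq_intros)
      have d2: "(arctan has_real_derivative inverse(1+((x-c)/s)^2)) (at ((x-c)/s))"
        by (rule DERIV_arctan)
      have "inverse(1+((x-c)/s)^2) * (1/s) = 1 / (s * (1 + ((x - c)/s)^2))"
        using pos sp by (simp add: field_simps)
      then show ?thesis using DERIV_chain2[OF d2 d1] by simp
    qed
  qed
  from fundamental_theorem_of_calculus[OF assms(1) this] show ?thesis .
qed

lemma arctan_int_le:
  fixes a b c s :: real assumes "a \<le> b" "s > 0"
  shows "integral {a..b} (\<lambda>x. 1 / (s * (1 + ((x - c)/s)^2))) \<le> pi"
proof -
  have "integral {a..b} (\<lambda>x. 1 / (s * (1 + ((x - c)/s)^2))) = arctan ((b-c)/s) - arctan ((a-c)/s)"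
    using arctan_int[OF assms] by (rule integral_unique)
  also have "\<dots> \<le> pi" using arctan_bounded[of "(b-c)/s"] arctan_bounded[of "(a-c)/s"] by linarith
  finally show ?thesis .
qed

lemma cont_psi: "continuous_on {0..} (\<lambda>t::real. t * ln t)"
proof -
  have "continuous (at x within {0..}) (\<lambda>t::real. t * ln t)" if "x \<in> {0..}" for x
  proof (cases "x = 0")
    case True
    have "((\<lambda>t::real. t * ln t) \<longlongrightarrow> 0) (at_right 0)" by real_asymp
    then show ?thesis using True by (simp add: continuous_within at_within_Ici_at_right)
  next
    case False
    then have "x > 0" using that by simp
    then have "isCont (\<lambda>t::real. t * ln t) x" by (auto intro!: continuous_intros)
    then show ?thesis by (simp add: continuous_at_imp_continuous_within)
  qed
  then show ?thesis by (simp add: continuous_on_eq_continuous_within)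
qed

lemma cont_psi_f:
  assumes "continuous_on S f" "\<And>x. x \<in> S \<Longrightarrow> f x \<ge> (0::real)"
  shows "continuous_on S (\<lambda>x. f x * ln (f x))"
  using continuous_on_compose2[OF cont_psi assms(1)] assms(2) by auto

lemma cont_sq_f:
  assumes "continuous_on S (f::real\<Rightarrow>real)"
  shows "continuous_on S (\<lambda>x. (x - c)^2 * f x)"
  using assms by (auto intro!: continuous_intros)

lemma cell_basic:
  fixes f :: "real \<Rightarrow> real"
  assumes "continuous_on {a..b} f" "\<And>x. x \<in> {a..b} \<Longrightarrow> f x \<ge> 0"
  shows "f integrable_on {a..b} \<and> (\<lambda>x. (x - c)^2 * f x) integrable_on {a..b} \<and>
    (\<lambda>x. f x * ln (f x)) integrable_on {a..b}"
  using assms cont_psi_f cont_sq_f integrable_continuous_real by blast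

lemma int_const_le:
  fixes f :: "real \<Rightarrow> real"
  assumes "a \<le> b" "f integrable_on {a..b}" "\<And>x. x \<in> {a..b} \<Longrightarrow> f x \<le> M"
  shows "integral {a..b} f \<le> M * (b - a)"
proof -
  have "integral {a..b} f \<le> integral {a..b} (\<lambda>x. M)"
    using assms by (intro integral_le) auto
  then show ?thesis using assms by (simp add: mult.commute)
qed

lemma int_const_ge:
  fixes f :: "real \<Rightarrow> real"
  assumes "a \<le> b" "f integrable_on {a..b}" "\<And>x. x \<in> {a..b} \<Longrightarrow> f x \<ge> m"
  shows "integral {a..b} f \<ge> m * (b - a)"
proof -
  have "integral {a..b} f \<ge> integral {a..b} (\<lambda>x. m)"
    using assms by (intro integral_le) auto
  then show ?thesis using assms by (simp add: mult.commute)
qed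

lemma cell_e_ge:
  fixes f :: "real \<Rightarrow> real"
  assumes ab: "a < b" and cf: "continuous_on {a..b} f" and nn: "\<And>x. x \<in> {a..b} \<Longrightarrow> f x \<ge> 0"
    and pp: "integral {a..b} f > 0"
  shows "integral {a..b} (\<lambda>x. f x * ln (f x)) \<ge> integral {a..b} f * ln (integral {a..b} f / (b - a))"
proof -
  define p where "p = integral {a..b} f"
  define s where "s = p / (b - a)"
  have sp: "s > 0" using pp ab by (simp add: s_def p_def)
  note I = cell_basic[OF cf nn, of 0, THEN conjunct1] cell_basic[OF cf nn, of 0, THEN conjunct2, THEN conjunct2]
  have "integral {a..b} (\<lambda>x. f x * ln s + f x - s) \<le> integral {a..b} (\<lambda>x. f x * ln (f x))"
  proof (rule integral_le)
    show "(\<lambda>x. f x * ln s + f x - s) integrable_on {a..b}"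
      by (auto intro!: integrable_continuous_real continuous_intros cf)
    show "(\<lambda>x. f x * ln (f x)) integrable_on {a..b}" using I by blast
  qed (use sp nn tangent_ln in auto)
  moreover have "integral {a..b} (\<lambda>x. f x * ln s + f x - s) = p * ln s + p - s * (b - a)"
  proof -
    have hf: "(f has_integral p) {a..b}" using I by (simp add: p_def has_integral_integral)
    have "((\<lambda>x. f x * ln s + f x - s) has_integral (p * ln s + p - Henstock_Kurzweil_Integration.content {a..b} *\<^sub>R s)) {a..b}"
      by (intro has_integral_diff has_integral_add has_integral_mult_left hf has_integral_const_real)
    then show ?thesis using ab by (simp add: integral_unique mult.commute)
  qed
  moreover have "s * (b - a) = p" using ab by (simp add: s_def)
  ultimately show ?thesis by (simp add: p_def s_def)
qed

lemma cell_good_lower: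
  fixes f :: "real \<Rightarrow> real"
  assumes ab: "a < b" and cf: "continuous_on {a..b} f" and m: "m > 0" "\<rho> \<ge> 1"
    and bnd: "\<And>x. x \<in> {a..b} \<Longrightarrow> m \<le> f x \<and> f x \<le> \<rho> * m"
  shows "- (integral {a..b} f * ln (integral {a..b} f)) \<ge>
     - integral {a..b} (\<lambda>x. f x * ln (f x))
     - integral {a..b} f / 2 * ln (12 * \<rho> * integral {a..b} (\<lambda>x. (x - c)^2 * f x) / integral {a..b} f)"
proof -
  define p where "p = integral {a..b} f"
  define d where "d = integral {a..b} (\<lambda>x. (x - c)^2 * f x)"
  define e where "e = integral {a..b} (\<lambda>x. f x * ln (f x))"
  have nn: "\<And>x. x \<in> {a..b} \<Longrightarrow> f x \<ge> 0" using bnd m by (meson less_le_trans less_imp_le)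
  note I = cell_basic[OF cf nn, of c, THEN conjunct1] cell_basic[OF cf nn, of c, THEN conjunct2, THEN conjunct1] cell_basic[OF cf nn, of c, THEN conjunct2, THEN conjunct2]
  have p1: "p \<ge> m * (b - a)" unfolding p_def using ab I bnd by (intro int_const_ge) auto
  have p2: "p \<le> \<rho> * m * (b - a)" unfolding p_def using ab I bnd by (intro int_const_le) auto
  have pp: "p > 0" using p1 m ab by (smt (verit) mult_pos_pos)
  have e1: "e \<ge> p * ln (p / (b - a))" unfolding e_def p_def
    using cell_e_ge[OF ab cf nn] pp p_def by simp
  have "d \<ge> integral {a..b} (\<lambda>x. (x - c)^2 * m)"
    unfolding d_def using I bnd ab
    by (intro integral_le) (auto intro!: mult_left_mono integrable_continuous_real continuous_intros)
  moreover have "integral {a..b} (\<lambda>x. (x - c)^2 * m) = ((b-c)^3 - (a-c)^3)/3 * m"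
    using integral_unique[OF poly_int[of a b c]] ab by simp
  ultimately have "d \<ge> (b-a)^3/12 * m" using poly_ge[of a b c] ab m
    by (smt (verit, best) mult_right_mono)
  then have "12 * d \<ge> m * (b - a) * (b-a)^2" by (simp add: power3_eq_cube power2_eq_square algebra_simps)
  moreover have "m * (b - a) \<ge> p / \<rho>" using p2 m by (simp add: field_simps mult.commute mult.left_commute)
  ultimately have "12 * d \<ge> p / \<rho> * (b-a)^2"
    by (smt (verit, ccfv_SIG) mult_right_mono zero_le_power2)
  then have D: "(b-a)^2 \<le> 12 * \<rho> * d / p" using pp m by (simp add: field_simps)
  have "ln (b - a) = ln ((b-a)^2) / 2" using ab by (simp add: ln_realpow)
  also have "\<dots> \<le> ln (12 * \<rho> * d / p) / 2"
  proof -
    have pos1: "(b-a)^2 > 0" using ab by simp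
    then have pos2: "12 * \<rho> * d / p > 0" using D by linarith
    have "ln ((b-a)^2) \<le> ln (12*\<rho>*d/p)"
      by (simp only: ln_le_cancel_iff[OF pos1 pos2] D)
    then show ?thesis by simp
  qed
  finally have "p * ln (b - a) \<le> p / 2 * ln (12 * \<rho> * d / p)" using pp by (simp add: mult_left_mono)
  moreover have "e \<ge> p * ln p - p * ln (b - a)" using e1 pp ab by (simp add: ln_div right_diff_distrib)
  ultimately show ?thesis unfolding p_def[symmetric] d_def[symmetric] e_def[symmetric] by linarith
qed

lemma phi_cont:
  fixes s c :: real assumes "s > 0"
  shows "continuous_on S (\<lambda>x. 1 / (s * (1 + ((x - c)/s)^2)))"
proof -
  have "\<And>x. 1 + ((x - c)/s)^2 > 0" by (simp add: add_pos_nonneg)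
  then have "\<And>x. s * (1 + ((x - c)/s)^2) \<noteq> 0" using assms by (metis mult_pos_pos less_irrefl)
  then show ?thesis by (auto intro!: continuous_intros)
qed

lemma cell_any_lower:
  fixes f :: "real \<Rightarrow> real"
  assumes ab: "a < b" and cf: "continuous_on {a..b} f" and nn: "\<And>x. x \<in> {a..b} \<Longrightarrow> f x \<ge> 0"
    and pp: "integral {a..b} f > 0" and dp: "integral {a..b} (\<lambda>x. (x - c)^2 * f x) > 0"
  shows "- (integral {a..b} f * ln (integral {a..b} f)) \<ge>
     - integral {a..b} (\<lambda>x. f x * ln (f x))
     - integral {a..b} f / 2 * ln (integral {a..b} (\<lambda>x. (x - c)^2 * f x) / integral {a..b} f)
     - pi * integral {a..b} f"
proof -
  define p where "p = integral {a..b} f"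
  define d where "d = integral {a..b} (\<lambda>x. (x - c)^2 * f x)"
  define e where "e = integral {a..b} (\<lambda>x. f x * ln (f x))"
  define \<sigma> where "\<sigma> = sqrt (d / p)"
  define \<phi> where "\<phi> = (\<lambda>x. 1 / (\<sigma> * (1 + ((x - c)/\<sigma>)^2)))"
  define I\<phi> where "I\<phi> = integral {a..b} \<phi>"
  have p0: "p > 0" and d0: "d > 0" using pp dp by (auto simp: p_def d_def)
  have s0: "\<sigma> > 0" using p0 d0 by (simp add: \<sigma>_def)
  have ss: "\<sigma>^2 = d / p" using p0 d0 by (simp add: \<sigma>_def)
  note I = cell_basic[OF cf nn, of c]
  have phipos: "\<phi> x > 0" for x using s0 by (simp add: \<phi>_def add_pos_nonneg)
  have phic: "continuous_on {a..b} \<phi>" unfolding \<phi>_def by (rule phi_cont[OF s0])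
  have Iphi: "I\<phi> \<le> pi" unfolding I\<phi>_def \<phi>_def using arctan_int_le[of a b \<sigma> c] ab s0 by simp
  define G where "G = (\<lambda>x. f x * (ln p - ln \<sigma>) - (x - c)^2 * f x / \<sigma>^2 + f x - p * \<phi> x)"
  have Gle: "G x \<le> f x * ln (f x)" if x: "x \<in> {a..b}" for x
  proof -
    define t where "t = ((x - c)/\<sigma>)^2"
    have t0: "t \<ge> 0" by (simp add: t_def)
    have "ln (p * \<phi> x) = ln p + ln (\<phi> x)" using p0 phipos[of x] by (simp add: ln_mult)
    also have "ln (\<phi> x) = - ln \<sigma> - ln (1 + t)"
    proof -
      have "1 + ((x - c)/\<sigma>)^2 > 0" by (simp add: add_pos_nonneg)
      then show ?thesis using s0 by (simp add: \<phi>_def t_def ln_div ln_mult)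
    qed
    finally have l1: "ln (p * \<phi> x) \<ge> ln p - ln \<sigma> - t"
      using ln_add_one_self_le_self[OF t0] by simp
    have "f x * ln (p * \<phi> x) \<ge> f x * (ln p - ln \<sigma> - t)"
      using l1 nn[OF x] by (simp add: mult_left_mono)
    moreover have "f x * ln (f x) \<ge> f x * ln (p * \<phi> x) + f x - p * \<phi> x"
      using tangent_ln[of "f x" "p * \<phi> x"] nn[OF x] p0 phipos by simp
    moreover have "f x * t = (x - c)^2 * f x / \<sigma>^2" by (simp add: t_def power_divide)
    ultimately show ?thesis unfolding G_def by (simp add: algebra_simps)
  qed
  have hf: "(f has_integral p) {a..b}" using I by (simp add: p_def has_integral_integral)
  have hd: "((\<lambda>x. (x - c)^2 * f x) has_integral d) {a..b}" using I by (simp add: d_def has_integral_integral)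
  have hphi: "(\<phi> has_integral I\<phi>) {a..b}" unfolding I\<phi>_def using integrable_continuous_real[OF phic] by (rule integrable_integral)
  have hG: "(G has_integral (p * (ln p - ln \<sigma>) - d / \<sigma>^2 + p - p * I\<phi>)) {a..b}"
    unfolding G_def
    by (intro has_integral_diff has_integral_add has_integral_mult_left has_integral_mult_right hf hphi
          has_integral_divide hd)
  have "integral {a..b} G \<le> e" unfolding e_def
    using Gle hG I by (intro integral_le) auto
  then have "e \<ge> p * (ln p - ln \<sigma>) - d / \<sigma>^2 + p - p * I\<phi>" using integral_unique[OF hG] by simp
  moreover have "d / \<sigma>^2 = p" using ss p0 d0 by simp
  moreover have "p * I\<phi> \<le> p * pi" using Iphi p0 by simp
  moreover have "ln \<sigma> = ln (d / p) / 2" unfolding \<sigma>_def using p0 d0 by (simp add: ln_sqrt)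
  ultimately have "e \<ge> p * ln p - p / 2 * ln (d / p) - pi * p" by (simp add: algebra_simps)
  then show ?thesis unfolding p_def[symmetric] d_def[symmetric] e_def[symmetric] by linarith
qed

lemma mass_bound:
  fixes f :: "real \<Rightarrow> real"
  assumes ab: "a < b" and cf: "continuous_on {a..b} f" and nn: "\<And>x. x \<in> {a..b} \<Longrightarrow> f x \<ge> 0"
    and fM: "\<And>x. x \<in> {a..b} \<Longrightarrow> f x \<le> M" and r: "r > 0"
  shows "integral {a..b} f \<le> integral {a..b} (\<lambda>x. (x - c)^2 * f x) / r^2 + pi * M * r"
proof -
  define \<phi> where "\<phi> = (\<lambda>x. 1 / (r * (1 + ((x - c)/r)^2)))"
  have M0: "M \<ge> 0" using fM nn ab by (meson atLeastAtMost_iff less_imp_le order.trans order_refl)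
  note I = cell_basic[OF cf nn, of c]
  have phic: "continuous_on {a..b} \<phi>" unfolding \<phi>_def by (rule phi_cont[OF r])
  have Iphi: "integral {a..b} \<phi> \<le> pi" unfolding \<phi>_def using arctan_int_le[of a b r c] ab r by simp
  have le: "f x \<le> (x - c)^2 * f x / r^2 + M * r * \<phi> x" if x: "x \<in> {a..b}" for x
  proof -
    define t where "t = ((x - c)/r)^2"
    have t0: "t \<ge> 0" by (simp add: t_def)
    have tt: "1 + t > 0" using t0 by simp
    have "(1 - t) * (1 + t) \<le> 1" by (simp add: algebra_simps)
    then have h1: "1 - t \<le> 1 / (1 + t)" using tt by (simp add: le_divide_eq)
    have "f x * (1 - t) \<le> f x * (1 / (1 + t))" using h1 nn[OF x] by (rule mult_left_mono)
    moreover have "f x / (1 + t) \<le> M / (1 + t)" using fM[OF x] tt by (simp add: divide_right_mono)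
    moreover have "M / (1 + t) = M * r * \<phi> x" using r t0 by (simp add: \<phi>_def t_def)
    moreover have "f x * t = (x - c)^2 * f x / r^2" by (simp add: t_def power_divide)
    ultimately show ?thesis by (simp add: algebra_simps)
  qed
  have c1: "continuous_on {a..b} (\<lambda>x. (x - c)^2 * f x / r^2 + M * r * \<phi> x)"
    using cf phic r by (auto intro!: continuous_intros)
  have c2: "continuous_on {a..b} (\<lambda>x. (x - c)^2 * f x / r^2)"
    using cf r by (auto intro!: continuous_intros)
  have c3: "continuous_on {a..b} (\<lambda>x. M * r * \<phi> x)"
    using phic by (intro continuous_intros)
  have "integral {a..b} f \<le> integral {a..b} (\<lambda>x. (x - c)^2 * f x / r^2 + M * r * \<phi> x)"
    using le I c1 integrable_continuous_real by (intro integral_le) auto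
  also have "\<dots> = integral {a..b} (\<lambda>x. (x - c)^2 * f x / r^2) + integral {a..b} (\<lambda>x. M * r * \<phi> x)"
    using c2 c3 integrable_continuous_real by (intro integral_add) auto
  also have "\<dots> = integral {a..b} (\<lambda>x. (x - c)^2 * f x) / r^2 + M * r * integral {a..b} \<phi>"
    by (simp add: integral_divide)
  also have "\<dots> \<le> integral {a..b} (\<lambda>x. (x - c)^2 * f x) / r^2 + M * r * pi"
    using Iphi M0 r by (simp add: mult_left_mono)
  finally show ?thesis by (simp add: algebra_simps)
qed

lemma cell_upper:
  fixes f :: "real \<Rightarrow> real"
  assumes ab: "a < b" and cf: "continuous_on {a..b} f" and nn: "\<And>x. x \<in> {a..b} \<Longrightarrow> f x \<ge> 0"
    and fM: "\<And>x. x \<in> {a..b} \<Longrightarrow> f x \<le> M" and M: "M > 0" and pp: "integral {a..b} f > 0"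
  shows "- (integral {a..b} f * ln (integral {a..b} f)) \<le>
     - integral {a..b} (\<lambda>x. f x * ln (f x)) + integral {a..b} f * ln (M / integral {a..b} f)"
proof -
  note I = cell_basic[OF cf nn, of 0]
  have "integral {a..b} (\<lambda>x. f x * ln (f x)) \<le> integral {a..b} (\<lambda>x. f x * ln M)"
  proof (rule integral_le)
    show "(\<lambda>x. f x * ln M) integrable_on {a..b}" using I by (auto intro!: integrable_on_mult_left)
    fix x assume x: "x \<in> {a..b}"
    show "f x * ln (f x) \<le> f x * ln M"
    proof (cases "f x = 0")
      case False
      then have "f x > 0" using nn[OF x] by simp
      then show ?thesis using fM[OF x] M by (intro mult_left_mono) auto
    qed simp
  qed (use I in auto)
  then have "integral {a..b} (\<lambda>x. f x * ln (f x)) \<le> integral {a..b} f * ln M" by simp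
  then show ?thesis using pp M by (simp add: ln_div algebra_simps)
qed

lemma cell_dist_upper:
  fixes f :: "real \<Rightarrow> real"
  assumes ab: "a < b" and cf: "continuous_on {a..b} f" and nn: "\<And>x. x \<in> {a..b} \<Longrightarrow> f x \<ge> 0"
    and fM: "\<And>x. x \<in> {a..b} \<Longrightarrow> f x \<le> M"
  shows "integral {a..b} (\<lambda>x. (x - (a+b)/2)^2 * f x) \<le> M * (b - a)^3 / 12"
proof -
  note I = cell_basic[OF cf nn, of "(a+b)/2"]
  have "integral {a..b} (\<lambda>x. (x - (a+b)/2)^2 * f x) \<le> integral {a..b} (\<lambda>x. (x - (a+b)/2)^2 * M)"
    using I fM by (intro integral_le) (auto intro!: mult_left_mono integrable_continuous_real continuous_intros)
  also have "\<dots> = ((b-(a+b)/2)^3 - (a-(a+b)/2)^3)/3 * M"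
    using integral_unique[OF poly_int[of a b "(a+b)/2"]] ab by simp
  also have "((b-(a+b)/2)^3 - (a-(a+b)/2)^3)/3 = (b-a)^3/12"
    by (simp add: power3_eq_cube field_simps)
  finally show ?thesis by (simp add: algebra_simps)
qed

lemma quant_mono:
  assumes "\<forall>i<n. a i < a (Suc i)" "i < j" "j \<le> n"
  shows "(a i :: real) < a j"
  using assms(2,3)
proof (induction j)
  case 0 then show ?case by simp
next
  case (Suc j)
  show ?case
  proof (cases "i = j")
    case True then show ?thesis using assms(1) Suc by simp
  next
    case False
    then have "a i < a j" using Suc by simp
    also have "a j < a (Suc j)" using assms(1) Suc by simp
    finally show ?thesis .
  qed
qed

lemma quant_le:
  assumes "\<forall>i<n. a i < a (Suc i)" "i \<le> j" "j \<le> n"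
  shows "(a i :: real) \<le> a j"
  using quant_mono[OF assms(1), of i j] assms by (cases "i = j") auto

lemma quant_range:
  assumes "is_quantizer lo hi (n, a, c)" "i \<le> n"
  shows "lo \<le> a i" "a i \<le> hi"
  using assms quant_le[of n a 0 i] quant_le[of n a i n] by (auto simp: is_quantizer_def)

lemma quant_cell:
  assumes "is_quantizer lo hi (n, a, c)" "i \<in> {1..n}"
  shows "a (i - 1) < a i" "lo \<le> a (i - 1)" "a i \<le> hi" "{a (i - 1)..a i} \<subseteq> {lo..hi}"
proof -
  have m: "\<forall>i<n. a i < a (Suc i)" using assms by (simp add: is_quantizer_def)
  show "a (i - 1) < a i" using m assms(2) by (metis Suc_diff_1 atLeastAtMost_iff diff_less less_le_trans
        zero_less_one le_numeral_extra(2) linorder_not_le)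
  show "lo \<le> a (i - 1)" "a i \<le> hi" using quant_range[OF assms(1)] assms(2) by auto
  then show "{a (i - 1)..a i} \<subseteq> {lo..hi}" by auto
qed

lemma sum_cells:
  fixes g :: "real \<Rightarrow> real"
  assumes Q: "is_quantizer lo hi (n, a, c)" and g: "g integrable_on {lo..hi}"
  shows "(\<Sum>i=1..n. integral {a (i - 1)..a i} g) = integral {lo..hi} g"
proof -
  have m: "\<forall>i<n. a i < a (Suc i)" and a0: "a 0 = lo" and an: "a n = hi"
    using Q by (auto simp: is_quantizer_def)
  have "k \<le> n \<Longrightarrow> (\<Sum>i=1..k. integral {a (i - 1)..a i} g) = integral {a 0..a k} g" for k
  proof (induction k)
    case 0 then show ?case by simp
  next
    case (Suc k)
    have r: "lo \<le> a k" "a (Suc k) \<le> hi" using quant_range[OF Q] Suc by auto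
    have "a 0 \<le> a k" "a k \<le> a (Suc k)" using quant_le[OF m] Suc by auto
    moreover have "g integrable_on {a 0..a (Suc k)}"
      using integrable_on_subinterval[OF g] a0 r by auto
    ultimately have "integral {a 0..a k} g + integral {a k..a (Suc k)} g = integral {a 0..a (Suc k)} g"
      by (rule Henstock_Kurzweil_Integration.integral_combine)
    then show ?case using Suc by simp
  qed
  then show ?thesis using a0 an by simp
qed

lemma sum_lengths:
  assumes Q: "is_quantizer lo hi (n, a, c)"
  shows "(\<Sum>i=1..n. a i - a (i - 1)) = hi - lo"
proof -
  have a0: "a 0 = lo" and an: "a n = hi" using Q by (auto simp: is_quantizer_def)
  have "(\<Sum>i=1..k. a i - a (i - 1)) = a k - a 0" for k
    by (induction k) auto
  then show ?thesis using a0 an by simp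
qed

lemma open_meets_support:
  fixes f :: "real \<Rightarrow> real"
  assumes supp: "closure {x. f x \<noteq> 0} = {lo..hi}" and U: "open U" "U \<noteq> {}" "U \<subseteq> {lo..hi}"
  shows "\<exists>x\<in>U. f x \<noteq> 0"
proof -
  have "U \<inter> closure {x. f x \<noteq> 0} \<noteq> {}" using U supp by auto
  then have "U \<inter> {x. f x \<noteq> 0} \<noteq> {}" using open_Int_closure_eq_empty[OF U(1)] by blast
  then show ?thesis by auto
qed

lemma cell_pos:
  fixes f :: "real \<Rightarrow> real"
  assumes supp: "closure {x. f x \<noteq> 0} = {lo..hi}" and cf: "continuous_on {lo..hi} f"
    and nn: "\<And>x. f x \<ge> 0" and uv: "lo \<le> u" "u < v" "v \<le> hi"
  shows "integral {u..v} f > 0" "integral {u..v} (\<lambda>x. (x - c)^2 * f x) > 0"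
proof -
  have cuv: "continuous_on {u..v} f" by (rule continuous_on_subset[OF cf]) (use uv in auto)
  define U where "U = {u<..<v} - {c}"
  have "open U" unfolding U_def by (auto intro!: open_Diff)
  moreover have "U \<noteq> {}"
  proof -
    have "(u+v)/2 \<in> {u<..<v}" "(u + 3 * v)/4 \<in> {u<..<v}" "(u+v)/2 \<noteq> (u + 3 * v)/4" using uv by auto
    then show ?thesis unfolding U_def by blast
  qed
  moreover have "U \<subseteq> {lo..hi}" using uv by (auto simp: U_def)
  ultimately obtain x0 where x0: "x0 \<in> U" "f x0 \<noteq> 0" using open_meets_support[OF supp] by blast
  have x0': "x0 \<in> {u..v}" "x0 \<noteq> c" using x0 by (auto simp: U_def)
  have "integral {u..v} f \<noteq> 0"
    using integral_eq_0_iff[OF cuv uv(2)] nn x0 x0' by auto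
  moreover have "integral {u..v} f \<ge> 0"
    using integrable_continuous_real[OF cuv] nn by (intro integral_nonneg) auto
  ultimately show "integral {u..v} f > 0" by simp
  have cuv2: "continuous_on {u..v} (\<lambda>x. (x - c)^2 * f x)" using cuv by (intro continuous_intros)
  have "(x0 - c)^2 * f x0 \<noteq> 0" using x0 x0' by simp
  then have "integral {u..v} (\<lambda>x. (x - c)^2 * f x) \<noteq> 0"
    using integral_eq_0_iff[OF cuv2 uv(2)] nn x0' by auto
  moreover have "integral {u..v} (\<lambda>x. (x - c)^2 * f x) \<ge> 0"
    using integrable_continuous_real[OF cuv2] nn by (intro integral_nonneg) auto
  ultimately show "integral {u..v} (\<lambda>x. (x - c)^2 * f x) > 0" by simp
qed

lemma jensen_ln:
  fixes p x :: "nat \<Rightarrow> real"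
  assumes "finite I" "\<And>i. i \<in> I \<Longrightarrow> p i > 0" "\<And>i. i \<in> I \<Longrightarrow> x i > 0" "(\<Sum>i\<in>I. p i) = 1"
  shows "(\<Sum>i\<in>I. p i * ln (x i)) \<le> ln (\<Sum>i\<in>I. p i * x i)"
proof -
  define X where "X = (\<Sum>i\<in>I. p i * x i)"
  have "I \<noteq> {}" using assms(4) by auto
  then have X0: "X > 0" unfolding X_def using assms by (intro sum_pos) auto
  have "p i * ln (x i) - p i * ln X \<le> p i * (x i / X) - p i" if "i \<in> I" for i
  proof -
    have "ln (x i / X) \<le> x i / X - 1" using ln_le_minus_one[of "x i / X"] assms(3)[OF that] X0 by simp
    then have "p i * ln (x i / X) \<le> p i * (x i / X - 1)" using assms(2)[OF that] by (simp add: mult_left_mono)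
    then show ?thesis using assms(2,3)[OF that] X0 by (simp add: ln_div algebra_simps)
  qed
  then have "(\<Sum>i\<in>I. p i * ln (x i) - p i * ln X) \<le> (\<Sum>i\<in>I. p i * (x i / X) - p i)"
    by (rule sum_mono)
  also have "\<dots> = X / X - 1" using assms(4) by (simp add: sum_subtractf sum_divide_distrib[symmetric] X_def)
  finally have "(\<Sum>i\<in>I. p i * ln (x i)) - ln X \<le> 0"
    using X0 assms(4) by (simp add: sum_subtractf sum_distrib_right[symmetric])
  then show ?thesis by (simp add: X_def)
qed

lemma unfold_q:
  "qcells (n, a, c) = n" "qbound (n, a, c) = a" "qrep (n, a, c) = c"
  "cell_prob f (n, a, c) i = integral {a (i - 1)..a i} f"
  "distortion f (n, a, c) = (\<Sum>i=1..n. integral {a (i - 1)..a i} (\<lambda>x. (x - c i)^2 * f x))"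
  by (simp_all add: qcells_def qbound_def qrep_def cell_prob_def distortion_def)

locale dens =
  fixes f :: "real \<Rightarrow> real" and lo hi :: real
  assumes lohi: "lo < hi" and nonneg: "\<And>x. f x \<ge> 0" and supp: "closure {x. f x \<noteq> 0} = {lo..hi}"
    and cont: "continuous_on {lo..hi} f" and int1: "integral {lo..hi} f = 1"
begin

definition Ent :: "quantizer \<Rightarrow> real" where
  "Ent Q = - (\<Sum>i=1..qcells Q. cell_prob f Q i * ln (cell_prob f Q i))"

definition EE :: real where
  "EE = integral {lo..hi} (\<lambda>x. f x * ln (f x))"

lemma cellfacts:
  assumes Q: "is_quantizer lo hi (n, a, c)" and i: "i \<in> {1..n}"
  shows "a (i - 1) < a i" "continuous_on {a (i - 1)..a i} f"
    "integral {a (i - 1)..a i} f > 0" "integral {a (i - 1)..a i} (\<lambda>x. (x - c')^2 * f x) > 0"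
    "{a (i - 1)..a i} \<subseteq> {lo..hi}"
proof -
  note qc = quant_cell[OF Q i]
  show "a (i - 1) < a i" "{a (i - 1)..a i} \<subseteq> {lo..hi}" using qc by auto
  show "continuous_on {a (i - 1)..a i} f" by (rule continuous_on_subset[OF cont qc(4)])
  show "integral {a (i - 1)..a i} f > 0" "integral {a (i - 1)..a i} (\<lambda>x. (x - c')^2 * f x) > 0"
    using cell_pos[OF supp cont nonneg qc(2) qc(1) qc(3)] by auto
qed

lemma sums:
  assumes Q: "is_quantizer lo hi (n, a, c)"
  shows "(\<Sum>i=1..n. integral {a (i - 1)..a i} f) = 1"
    "(\<Sum>i=1..n. integral {a (i - 1)..a i} (\<lambda>x. f x * ln (f x))) = EE"
    "(\<Sum>i=1..n. a i - a (i - 1)) = hi - lo"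
proof -
  show "(\<Sum>i=1..n. integral {a (i - 1)..a i} f) = 1"
    using sum_cells[OF Q integrable_continuous_real[OF cont]] int1 by simp
  have "continuous_on {lo..hi} (\<lambda>x. f x * ln (f x))" using cont_psi_f[OF cont] nonneg by auto
  then show "(\<Sum>i=1..n. integral {a (i - 1)..a i} (\<lambda>x. f x * ln (f x))) = EE"
    unfolding EE_def using sum_cells[OF Q integrable_continuous_real] by blast
  show "(\<Sum>i=1..n. a i - a (i - 1)) = hi - lo" by (rule sum_lengths[OF Q])
qed

lemma rho_bound:
  fixes \<epsilon> m :: real
  assumes "0 < \<epsilon>" "\<epsilon> \<le> 1/2" "m \<ge> \<epsilon> * (1 - \<epsilon>)"
  shows "m + 2 * \<epsilon>^2 \<le> (1 + \<epsilon>) / (1 - \<epsilon>) * m"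
proof -
  have "2 * \<epsilon>^2 * (1 - \<epsilon>) \<le> 2 * \<epsilon> * m"
    using assms mult_left_mono[OF assms(3), of "2*\<epsilon>"] by (simp add: power2_eq_square algebra_simps)
  then have "(m + 2 * \<epsilon>^2) * (1 - \<epsilon>) \<le> (1 + \<epsilon>) * m" by (simp add: algebra_simps)
  then show ?thesis using assms by (simp add: le_divide_eq)
qed

lemma Q_lower:
  assumes Q: "is_quantizer lo hi (n, a, c)" and eps: "0 < \<epsilon>" "\<epsilon> \<le> 1/2" and eta: "\<eta> > 0"
    and uc: "\<And>x y. x \<in> {lo..hi} \<Longrightarrow> y \<in> {lo..hi} \<Longrightarrow> \<bar>x - y\<bar> \<le> \<eta> \<Longrightarrow> \<bar>f x - f y\<bar> \<le> \<epsilon>^2"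
    and fM: "\<And>x. x \<in> {lo..hi} \<Longrightarrow> f x \<le> M" and r: "r > 0"
  shows "Ent (n, a, c) \<ge> - EE - ln (12 * ((1 + \<epsilon>) / (1 - \<epsilon>)) * distortion f (n, a, c)) / 2
      - pi * (distortion f (n, a, c) / r^2 + (pi * M * r / \<eta> + 2 * \<epsilon>) * (hi - lo))"
proof -
  define \<rho> where "\<rho> = (1 + \<epsilon>) / (1 - \<epsilon>)"
  have rho1: "\<rho> \<ge> 1" using eps by (simp add: \<rho>_def)
  define P where "P i = integral {a (i - 1)..a i} f" for i
  define Dd where "Dd i = integral {a (i - 1)..a i} (\<lambda>x. (x - c i)^2 * f x)" for i
  define Ee where "Ee i = integral {a (i - 1)..a i} (\<lambda>x. f x * ln (f x))" for i
  define K where "K = pi * M * r / \<eta> + 2 * \<epsilon>"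
  have M0: "M \<ge> 0" using fM[of lo] nonneg[of lo] lohi by auto
  have K0: "K \<ge> 0" using M0 r eta eps by (simp add: K_def)
  have cellb: "- (P i * ln (P i)) \<ge> - Ee i - P i / 2 * ln (12 * \<rho> * Dd i / P i)
       - pi * (Dd i / r^2 + K * (a i - a (i - 1)))" if i: "i \<in> {1..n}" for i
  proof -
    define u where "u = a (i - 1)"
    define v where "v = a i"
    note cf = cellfacts(1,2,3,5)[OF Q i, folded u_def v_def] cellfacts(4)[OF Q i, of "c i", folded u_def v_def]
    have uv: "u < v" and cc: "continuous_on {u..v} f" and P0: "P i > 0" and D0: "Dd i > 0"
      and sub: "{u..v} \<subseteq> {lo..hi}"
      using cf by (auto simp: P_def Dd_def u_def v_def)
    have nn: "\<And>x. x \<in> {u..v} \<Longrightarrow> f x \<ge> 0" using nonneg by auto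
    have extra0: "pi * (Dd i / r^2 + K * (v - u)) \<ge> 0" using D0 K0 uv r by simp
    show ?thesis
    proof (cases "v - u \<le> \<eta> \<and> f u \<ge> \<epsilon>")
      case True
      define m where "m = f u - \<epsilon>^2"
      have e2: "\<epsilon>^2 \<le> \<epsilon> / 2" using eps by (simp add: power2_eq_square mult_left_le_one_le)
      have mge: "m \<ge> \<epsilon> * (1 - \<epsilon>)" using True by (simp add: m_def power2_eq_square algebra_simps)
      have m0: "m > 0" using True e2 eps by (simp add: m_def)
      have bnd: "m \<le> f x \<and> f x \<le> \<rho> * m" if x: "x \<in> {u..v}" for x
      proof -
        have "\<bar>f x - f u\<bar> \<le> \<epsilon>^2" using uc[of x u] x sub True uv by auto
        then have "m \<le> f x" "f x \<le> m + 2 * \<epsilon>^2" by (auto simp: m_def)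
        then show ?thesis using rho_bound[OF eps mge] by (simp add: \<rho>_def)
      qed
      have "- (P i * ln (P i)) \<ge> - Ee i - P i / 2 * ln (12 * \<rho> * Dd i / P i)"
        using cell_good_lower[OF uv cc m0 rho1 bnd, of "c i"] by (simp add: P_def Dd_def Ee_def u_def v_def)
      then show ?thesis using extra0 by (simp add: u_def v_def)
    next
      case False
      have l1: "- (P i * ln (P i)) \<ge> - Ee i - P i / 2 * ln (Dd i / P i) - pi * P i"
        using cell_any_lower[OF uv cc nn, of "c i"] cf by (simp add: P_def Dd_def Ee_def u_def v_def)
      have "ln (Dd i / P i) \<le> ln (12 * \<rho> * Dd i / P i)"
        using D0 P0 rho1 by (subst ln_le_cancel_iff) (auto simp: divide_right_mono)
      then have l2: "P i / 2 * ln (Dd i / P i) \<le> P i / 2 * ln (12 * \<rho> * Dd i / P i)"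
        using P0 by (simp add: mult_left_mono)
      have "P i \<le> Dd i / r^2 + K * (v - u)"
      proof (cases "v - u > \<eta>")
        case True
        have "P i \<le> Dd i / r^2 + pi * M * r"
          using mass_bound[OF uv cc nn _ r, of M "c i"] fM sub by (auto simp: P_def Dd_def u_def v_def)
        moreover have "pi * M * r \<le> pi * M * r / \<eta> * (v - u)"
        proof -
          have "pi * M * r * 1 \<le> pi * M * r * ((v - u) / \<eta>)"
            using True eta M0 r by (intro mult_left_mono) auto
          then show ?thesis by simp
        qed
        moreover have "2 * \<epsilon> * (v - u) \<ge> 0" using eps uv by simp
        ultimately show ?thesis by (simp add: K_def algebra_simps)
      next
        case F2: False
        then have fu: "f u < \<epsilon>" using False by auto
        have "f x \<le> 2 * \<epsilon>" if x: "x \<in> {u..v}" for x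
        proof -
          have "\<bar>f x - f u\<bar> \<le> \<epsilon>^2" using uc[of x u] x sub F2 uv by auto
          moreover have "\<epsilon>^2 \<le> \<epsilon>" using eps by (simp add: power2_eq_square mult_left_le_one_le)
          ultimately show ?thesis using fu by linarith
        qed
        then have "P i \<le> 2 * \<epsilon> * (v - u)" unfolding P_def u_def v_def
          using int_const_le[OF _ integrable_continuous_real[OF cc]] uv by (auto simp: u_def v_def)
        moreover have "Dd i / r^2 \<ge> 0" "pi * M * r / \<eta> * (v - u) \<ge> 0" using D0 M0 r eta uv by auto
        ultimately show ?thesis by (simp add: K_def algebra_simps)
      qed
      then have "pi * P i \<le> pi * (Dd i / r^2 + K * (v - u))" by (rule mult_left_mono) simp
      then show ?thesis using l1 l2 unfolding u_def v_def by linarith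
    qed
  qed
  have Psum: "(\<Sum>i=1..n. P i) = 1" and Esum: "(\<Sum>i=1..n. Ee i) = EE"
    and Lsum: "(\<Sum>i=1..n. a i - a (i - 1)) = hi - lo"
    using sums[OF Q] by (simp_all add: P_def Ee_def)
  have Dsum: "distortion f (n, a, c) = (\<Sum>i=1..n. Dd i)" by (simp add: unfold_q Dd_def)
  have P0: "\<And>i. i \<in> {1..n} \<Longrightarrow> P i > 0" and D0: "\<And>i. i \<in> {1..n} \<Longrightarrow> Dd i > 0"
    using cellfacts(3,4)[OF Q] by (auto simp: P_def Dd_def)
  have J: "(\<Sum>i=1..n. P i * ln (12 * \<rho> * Dd i / P i)) \<le> ln (\<Sum>i=1..n. P i * (12 * \<rho> * Dd i / P i))"
    using P0 D0 rho1 Psum by (intro jensen_ln) auto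
  have "(\<Sum>i=1..n. P i * (12 * \<rho> * Dd i / P i)) = 12 * \<rho> * (\<Sum>i=1..n. Dd i)"
    unfolding sum_distrib_left
    apply (intro sum.cong refl)
    subgoal for i using P0[of i] by simp
    done
  with J have J2: "(\<Sum>i=1..n. P i / 2 * ln (12 * \<rho> * Dd i / P i)) \<le> ln (12 * \<rho> * distortion f (n, a, c)) / 2"
    using Dsum by (simp add: sum_divide_distrib[symmetric])
  define Dl where "Dl i = a i - a (i - 1)" for i
  have "(\<Sum>i=1..n. - Ee i - P i / 2 * ln (12 * \<rho> * Dd i / P i) - pi * (Dd i / r^2 + K * Dl i))
        \<le> (\<Sum>i=1..n. - (P i * ln (P i)))"
    using cellb unfolding Dl_def by (rule sum_mono)
  also have "(\<Sum>i=1..n. - (P i * ln (P i))) = Ent (n, a, c)"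
    by (simp add: Ent_def unfold_q P_def sum_negf)
  also have "(\<Sum>i=1..n. - Ee i - P i / 2 * ln (12 * \<rho> * Dd i / P i) - pi * (Dd i / r^2 + K * Dl i))
     = - (\<Sum>i=1..n. Ee i) - (\<Sum>i=1..n. P i / 2 * ln (12 * \<rho> * Dd i / P i))
      - pi * ((\<Sum>i=1..n. Dd i) / r^2 + K * (\<Sum>i=1..n. Dl i))"
    by (simp add: sum_subtractf sum_negf sum_distrib_left sum.distrib sum_divide_distrib algebra_simps)
  finally have "Ent (n, a, c) \<ge> - (\<Sum>i=1..n. Ee i) - (\<Sum>i=1..n. P i / 2 * ln (12 * \<rho> * Dd i / P i))
      - pi * ((\<Sum>i=1..n. Dd i) / r^2 + K * (\<Sum>i=1..n. Dl i))" .
  moreover have L': "(\<Sum>i=1..n. Dl i) = hi - lo" using Lsum by (simp add: Dl_def)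
  ultimately have "Ent (n, a, c) \<ge> - EE - (\<Sum>i=1..n. P i / 2 * ln (12 * \<rho> * Dd i / P i))
      - pi * (distortion f (n, a, c) / r^2 + K * (hi - lo))"
    unfolding L' Esum Dsum[symmetric] by simp
  then show ?thesis unfolding \<rho>_def[symmetric] K_def[symmetric] using J2 by linarith
qed

end

lemma uq_unfold:
  "uniform_quantizer lo hi \<delta> = (nat \<lceil>(hi - lo) / \<delta>\<rceil>, (\<lambda>i. min (lo + real i * \<delta>) hi),
     (\<lambda>i. (min (lo + real (i - 1) * \<delta>) hi + min (lo + real i * \<delta>) hi) / 2))"
  by (simp add: uniform_quantizer_def Let_def)

lemma uq_n:
  assumes "lo < hi" "\<delta> > 0"
  shows "nat \<lceil>(hi - lo) / \<delta>\<rceil> \<ge> 1"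
    "real (nat \<lceil>(hi - lo) / \<delta>\<rceil> - 1) * \<delta> < hi - lo"
    "real (nat \<lceil>(hi - lo) / \<delta>\<rceil>) * \<delta> \<ge> hi - lo"
proof -
  define n where "n = nat \<lceil>(hi - lo) / \<delta>\<rceil>"
  have q: "(hi - lo) / \<delta> > 0" using assms by simp
  have rn: "real n = of_int \<lceil>(hi - lo) / \<delta>\<rceil>" using q unfolding n_def by simp
  show "n \<ge> 1" using q unfolding n_def by linarith
  have "real n \<ge> (hi - lo) / \<delta>" using rn by linarith
  then show "real n * \<delta> \<ge> hi - lo" using assms by (simp add: pos_divide_le_eq)
  have "real n < (hi - lo) / \<delta> + 1" using rn by linarith
  moreover have "real (n - 1) = real n - 1" using \<open>n \<ge> 1\<close> by simp
  ultimately have "real (n - 1) < (hi - lo) / \<delta>" by linarith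
  then show "real (n - 1) * \<delta> < hi - lo" using assms by (simp add: pos_less_divide_eq)
qed

lemma uq_facts:
  assumes lh: "lo < hi" and d: "\<delta> > 0"
  defines "n \<equiv> nat \<lceil>(hi - lo) / \<delta>\<rceil>" and "a \<equiv> (\<lambda>i. min (lo + real i * \<delta>) hi)"
  shows "is_quantizer lo hi (n, a, c)"
    "\<And>i. i < n \<Longrightarrow> a i = lo + real i * \<delta>"
    "\<And>i. i \<in> {1..n} \<Longrightarrow> i < n \<Longrightarrow> a i - a (i - 1) = \<delta>"
    "a n - a (n - 1) \<le> \<delta>"
proof -
  note N = uq_n[OF lh d, folded n_def]
  show ai: "\<And>i. i < n \<Longrightarrow> a i = lo + real i * \<delta>"
  proof -
    fix i assume "i < n"
    then have "real i \<le> real (n - 1)" by simp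
    then have "real i * \<delta> \<le> real (n - 1) * \<delta>" using d by (simp add: mult_right_mono)
    then show "a i = lo + real i * \<delta>" using N(2) by (simp add: a_def)
  qed
  have an: "a n = hi" using N(3) by (simp add: a_def)
  show "a n - a (n - 1) \<le> \<delta>"
  proof -
    have "a (n - 1) = lo + real (n - 1) * \<delta>" using ai N(1) by simp
    moreover have "real (n - 1) = real n - 1" using N(1) by simp
    ultimately have "a (n - 1) = lo + real n * \<delta> - \<delta>" by (simp add: algebra_simps)
    then show ?thesis using an N(3) by simp
  qed
  show "\<And>i. i \<in> {1..n} \<Longrightarrow> i < n \<Longrightarrow> a i - a (i - 1) = \<delta>"
  proof -
    fix i assume i: "i \<in> {1..n}" "i < n"
    have "a (i - 1) = lo + real (i - 1) * \<delta>" using ai i by simp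
    moreover have "real (i - 1) = real i - 1" using i by simp
    ultimately show "a i - a (i - 1) = \<delta>" using ai[OF i(2)] by (simp add: algebra_simps)
  qed
  show "is_quantizer lo hi (n, a, c)"
    unfolding is_quantizer_def
  proof (simp, intro conjI allI impI)
    show "Suc 0 \<le> n" using N(1) by simp
    show "a 0 = lo" using lh by (simp add: a_def)
    show "a n = hi" by (rule an)
    fix i assume i: "i < n"
    show "a i < a (Suc i)"
    proof (cases "Suc i < n")
      case True
      then show ?thesis using ai[of i] ai[of "Suc i"] i d by simp
    next
      case False
      then have "Suc i = n" using i by simp
      then have ri: "real i = real n - 1" by linarith
      have "a (Suc i) = hi" using \<open>Suc i = n\<close> an by simp
      then show ?thesis using ai[OF i] ri N(2) by (simp add: algebra_simps)
    qed
  qed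
qed

context dens begin

lemma U_upper:
  assumes d: "0 < \<delta>" "\<delta> \<le> \<eta>" and eps: "0 < \<epsilon>" "\<epsilon> \<le> 1/2"
    and uc: "\<And>x y. x \<in> {lo..hi} \<Longrightarrow> y \<in> {lo..hi} \<Longrightarrow> \<bar>x - y\<bar> \<le> \<eta> \<Longrightarrow> \<bar>f x - f y\<bar> \<le> \<epsilon>^2"
    and fM: "\<And>x. x \<in> {lo..hi} \<Longrightarrow> f x \<le> M" and M: "M > 0"
  shows "Ent (uniform_quantizer lo hi \<delta>) \<le> - EE - ln \<delta> + ln ((1 + \<epsilon>) / (1 - \<epsilon>))
            + 2 * \<epsilon> / exp 1 * (hi - lo) + M * \<delta> / exp 1"
    "distortion f (uniform_quantizer lo hi \<delta>) \<le> \<delta>^2 / 12 * ((1 + \<epsilon>) / (1 - \<epsilon>) + 2 * \<epsilon> * (hi - lo) + M * \<delta>)"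
proof -
  define n where "n = nat \<lceil>(hi - lo) / \<delta>\<rceil>"
  define a where "a = (\<lambda>i. min (lo + real i * \<delta>) hi)"
  define c where "c = (\<lambda>i. (min (lo + real (i - 1) * \<delta>) hi + min (lo + real i * \<delta>) hi) / 2)"
  have Qeq: "uniform_quantizer lo hi \<delta> = (n, a, c)" by (simp add: uq_unfold n_def a_def c_def)
  have ca: "c i = (a (i - 1) + a i) / 2" for i by (simp add: c_def a_def)
  note UF = uq_facts(2,3,4)[OF lohi d(1), folded n_def a_def]
  note Q = uq_facts(1)[OF lohi d(1), where c=c, folded n_def a_def]
  have n1: "n \<ge> 1" using uq_n[OF lohi d(1)] by (simp add: n_def)
  define \<rho> where "\<rho> = (1 + \<epsilon>) / (1 - \<epsilon>)"
  have rho1: "\<rho> \<ge> 1" using eps by (simp add: \<rho>_def)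
  have lnrho: "ln \<rho> \<ge> 0" using rho1 by simp
  define P where "P i = integral {a (i - 1)..a i} f" for i
  define Dd where "Dd i = integral {a (i - 1)..a i} (\<lambda>x. (x - c i)^2 * f x)" for i
  define Ee where "Ee i = integral {a (i - 1)..a i} (\<lambda>x. f x * ln (f x))" for i
  define Dl where "Dl i = a i - a (i - 1)" for i
  define Xn where "Xn i = (if i = n then M * \<delta> / exp 1 else 0)" for i
  define Yn where "Yn i = (if i = n then M * \<delta>^3 / 12 else 0)" for i
  have cellb: "- (P i * ln (P i)) \<le> - Ee i - P i * ln \<delta> + P i * ln \<rho> + 2 * \<epsilon> / exp 1 * Dl i + Xn i
      \<and> Dd i \<le> \<rho> * P i * \<delta>^2 / 12 + 2 * \<epsilon> * \<delta>^2 / 12 * Dl i + Yn i" if i: "i \<in> {1..n}" for i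
  proof -
    define u where "u = a (i - 1)"
    define v where "v = a i"
    note cf = cellfacts(1,2,3,5)[OF Q i, folded u_def v_def]
    have uv: "u < v" and cc: "continuous_on {u..v} f" and P0: "P i > 0"
      and sub: "{u..v} \<subseteq> {lo..hi}"
      using cf by (auto simp: P_def u_def v_def)
    have nn: "\<And>x. x \<in> {u..v} \<Longrightarrow> f x \<ge> 0" using nonneg by auto
    have cmid: "c i = (u + v) / 2" by (simp add: ca u_def v_def)
    have Dl0: "Dl i > 0" using uv by (simp add: Dl_def u_def v_def)
    have len: "v - u \<le> \<delta>"
      using UF(2)[OF i] UF(3) i by (cases "i < n") (auto simp: u_def v_def a_def)
    have close: "\<bar>f x - f u\<bar> \<le> \<epsilon>^2" if x: "x \<in> {u..v}" for x
      using uc[of x u] x sub len d uv by auto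
    have Dd_alt: "Dd i = integral {u..v} (\<lambda>x. (x - (u + v) / 2)^2 * f x)"
      by (simp add: Dd_def cmid u_def v_def)
    have split: "P i * ln (K / P i) = - P i * ln \<delta> + P i * ln (K * \<delta> / P i)" if K: "K > 0" for K
    proof -
      have "ln (K * \<delta> / P i) = ln (K / P i) + ln \<delta>" using K P0 d by (simp add: ln_div ln_mult)
      then show ?thesis by (simp add: algebra_simps)
    qed
    show ?thesis
    proof (cases "i = n")
      case True
      have "- (P i * ln (P i)) \<le> - Ee i + P i * ln (M / P i)"
        using cell_upper[OF uv cc nn _ M] fM sub P0 by (auto simp: P_def Ee_def u_def v_def)
      also have "P i * ln (M / P i) = - P i * ln \<delta> + P i * ln (M * \<delta> / P i)" by (rule split[OF M])
      also have "P i * ln (M * \<delta> / P i) \<le> M * \<delta> / exp 1" using plnK_le[OF P0, of "M * \<delta>"] M d by simp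
      finally have A: "- (P i * ln (P i)) \<le> - Ee i - P i * ln \<delta> + M * \<delta> / exp 1" by simp
      have "Dd i \<le> M * (v - u)^3 / 12"
        unfolding Dd_alt using cell_dist_upper[OF uv cc nn] fM sub by auto
      also have "(v - u)^3 \<le> \<delta>^3" using len uv by (intro power_mono) auto
      then have "M * (v - u)^3 / 12 \<le> M * \<delta>^3 / 12" using M by simp
      finally have B: "Dd i \<le> M * \<delta>^3 / 12" .
      have "P i * ln \<rho> \<ge> 0" using P0 lnrho by simp
      moreover have "2 * \<epsilon> / exp 1 * Dl i \<ge> 0" "\<rho> * P i * \<delta>^2 / 12 \<ge> 0" "2 * \<epsilon> * \<delta>^2 / 12 * Dl i \<ge> 0"
        using eps Dl0 rho1 P0 by auto
      ultimately show ?thesis using A B True by (simp add: Xn_def Yn_def)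
    next
      case False
      then have iln: "i < n" using i by simp
      have lenD: "v - u = \<delta>" using UF(2)[OF i iln] by (simp add: u_def v_def a_def)
      show ?thesis
      proof (cases "f u \<ge> \<epsilon>")
        case True
        define m where "m = f u - \<epsilon>^2"
        have e2: "\<epsilon>^2 \<le> \<epsilon> / 2" using eps by (simp add: power2_eq_square mult_left_le_one_le)
        have mge: "m \<ge> \<epsilon> * (1 - \<epsilon>)" using True by (simp add: m_def power2_eq_square algebra_simps)
        have m0: "m > 0" using True e2 eps by (simp add: m_def)
        have bnd: "m \<le> f x \<and> f x \<le> \<rho> * m" if x: "x \<in> {u..v}" for x
        proof -
          have "m \<le> f x" "f x \<le> m + 2 * \<epsilon>^2" using close[OF x] by (auto simp: m_def)
          then show ?thesis using rho_bound[OF eps mge] by (simp add: \<rho>_def)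
        qed
        have Pm: "P i \<ge> m * \<delta>"
          using int_const_ge[OF _ integrable_continuous_real[OF cc], of m] bnd uv lenD
          by (auto simp: P_def u_def v_def)
        have rm0: "\<rho> * m > 0" using m0 rho1 by simp
        have "- (P i * ln (P i)) \<le> - Ee i + P i * ln (\<rho> * m / P i)"
          using cell_upper[OF uv cc nn _ rm0] bnd P0 by (auto simp: P_def Ee_def u_def v_def)
        also have "P i * ln (\<rho> * m / P i) = - P i * ln \<delta> + P i * ln (\<rho> * m * \<delta> / P i)" by (rule split[OF rm0])
        also have "P i * ln (\<rho> * m * \<delta> / P i) \<le> P i * ln \<rho>"
        proof -
          have "\<rho> * m * \<delta> / P i \<le> \<rho>" using Pm P0 rho1 by (simp add: divide_le_eq mult_left_mono)
          moreover have "\<rho> * m * \<delta> / P i > 0" using rm0 d P0 by simp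
          ultimately have "ln (\<rho> * m * \<delta> / P i) \<le> ln \<rho>" by simp
          then show ?thesis using P0 by (simp add: mult_left_mono)
        qed
        finally have A: "- (P i * ln (P i)) \<le> - Ee i - P i * ln \<delta> + P i * ln \<rho>" by simp
        have "Dd i \<le> \<rho> * m * (v - u)^3 / 12"
          unfolding Dd_alt using cell_dist_upper[OF uv cc nn] bnd by auto
        also have "\<rho> * m * (v - u)^3 / 12 = \<rho> * (m * \<delta>) * \<delta>^2 / 12" using lenD by (simp add: power3_eq_cube power2_eq_square)
        also have "\<dots> \<le> \<rho> * P i * \<delta>^2 / 12" using Pm rho1 by (simp add: mult_left_mono mult_right_mono divide_right_mono)
        finally have B: "Dd i \<le> \<rho> * P i * \<delta>^2 / 12" .
        have "2 * \<epsilon> / exp 1 * Dl i \<ge> 0" "2 * \<epsilon> * \<delta>^2 / 12 * Dl i \<ge> 0" using eps Dl0 by auto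
        then show ?thesis using A B False by (simp add: Xn_def Yn_def)
      next
        case False2: False
        have fb: "f x \<le> 2 * \<epsilon>" if x: "x \<in> {u..v}" for x
        proof -
          have "\<epsilon>^2 \<le> \<epsilon>" using eps by (simp add: power2_eq_square mult_left_le_one_le)
          then show ?thesis using close[OF x] False2 by linarith
        qed
        have e0: "2 * \<epsilon> > 0" using eps by simp
        have "- (P i * ln (P i)) \<le> - Ee i + P i * ln (2 * \<epsilon> / P i)"
          using cell_upper[OF uv cc nn _ e0] fb P0 by (auto simp: P_def Ee_def u_def v_def)
        also have "P i * ln (2 * \<epsilon> / P i) = - P i * ln \<delta> + P i * ln (2 * \<epsilon> * \<delta> / P i)" by (rule split[OF e0])
        also have "P i * ln (2 * \<epsilon> * \<delta> / P i) \<le> 2 * \<epsilon> * \<delta> / exp 1" using plnK_le[OF P0, of "2 * \<epsilon> * \<delta>"] e0 d by simp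
        finally have A: "- (P i * ln (P i)) \<le> - Ee i - P i * ln \<delta> + 2 * \<epsilon> / exp 1 * Dl i"
          using lenD by (simp add: Dl_def u_def v_def)
        have "Dd i \<le> 2 * \<epsilon> * (v - u)^3 / 12"
          unfolding Dd_alt using cell_dist_upper[OF uv cc nn, of "2 * \<epsilon>"] fb by blast
        also have "\<dots> = 2 * \<epsilon> * \<delta>^2 / 12 * Dl i" using lenD by (simp add: Dl_def u_def v_def power3_eq_cube power2_eq_square)
        finally have B: "Dd i \<le> 2 * \<epsilon> * \<delta>^2 / 12 * Dl i" .
        have "P i * ln \<rho> \<ge> 0" "\<rho> * P i * \<delta>^2 / 12 \<ge> 0" using P0 lnrho rho1 by auto
        then show ?thesis using A B False by (simp add: Xn_def Yn_def)
      qed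
    qed
  qed
  have Psum: "(\<Sum>i=1..n. P i) = 1" and Esum: "(\<Sum>i=1..n. Ee i) = EE"
    and Lsum: "(\<Sum>i=1..n. Dl i) = hi - lo"
    using sums[OF Q] by (simp_all add: P_def Ee_def Dl_def)
  have nin: "n \<in> {1..n}" using n1 by simp
  have Xsum: "(\<Sum>i=1..n. Xn i) = M * \<delta> / exp 1"
    unfolding Xn_def using nin by (simp add: sum.delta')
  have Ysum: "(\<Sum>i=1..n. Yn i) = M * \<delta>^3 / 12"
    unfolding Yn_def using nin by (simp add: sum.delta')
  have "Ent (n, a, c) = (\<Sum>i=1..n. - (P i * ln (P i)))"
    by (simp add: Ent_def unfold_q P_def sum_negf)
  also have "\<dots> \<le> (\<Sum>i=1..n. - Ee i - P i * ln \<delta> + P i * ln \<rho> + 2 * \<epsilon> / exp 1 * Dl i + Xn i)"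
    using cellb by (intro sum_mono) auto
  also have "\<dots> = - (\<Sum>i=1..n. Ee i) - (\<Sum>i=1..n. P i) * ln \<delta> + (\<Sum>i=1..n. P i) * ln \<rho>
       + 2 * \<epsilon> / exp 1 * (\<Sum>i=1..n. Dl i) + (\<Sum>i=1..n. Xn i)"
    by (simp add: sum.distrib sum_subtractf sum_negf sum_distrib_left sum_distrib_right)
  finally show "Ent (uniform_quantizer lo hi \<delta>) \<le> - EE - ln \<delta> + ln ((1 + \<epsilon>) / (1 - \<epsilon>))
            + 2 * \<epsilon> / exp 1 * (hi - lo) + M * \<delta> / exp 1"
    unfolding Qeq Psum Esum Lsum Xsum \<rho>_def by simp
  have "distortion f (n, a, c) = (\<Sum>i=1..n. Dd i)" by (simp add: unfold_q Dd_def)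
  also have "\<dots> \<le> (\<Sum>i=1..n. \<rho> * P i * \<delta>^2 / 12 + 2 * \<epsilon> * \<delta>^2 / 12 * Dl i + Yn i)"
    using cellb by (intro sum_mono) auto
  also have "\<dots> = \<rho> * (\<Sum>i=1..n. P i) * \<delta>^2 / 12 + 2 * \<epsilon> * \<delta>^2 / 12 * (\<Sum>i=1..n. Dl i) + (\<Sum>i=1..n. Yn i)"
    by (simp add: sum.distrib sum_distrib_left sum_distrib_right sum_divide_distrib)
  finally show "distortion f (uniform_quantizer lo hi \<delta>) \<le> \<delta>^2 / 12 * ((1 + \<epsilon>) / (1 - \<epsilon>) + 2 * \<epsilon> * (hi - lo) + M * \<delta>)"
    unfolding Qeq Psum Lsum Ysum \<rho>_def[symmetric] by (simp add: power3_eq_cube power2_eq_square algebra_simps add_divide_distrib diff_divide_distrib)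
qed

end

lemma aoi_core:
  fixes p l :: "nat \<Rightarrow> real"
  assumes n: "n \<ge> 1" and p: "\<And>i. i \<in> {1..n} \<Longrightarrow> p i > 0" and ps: "(\<Sum>i=1..n. p i) = 1"
    and l: "\<And>i. i \<in> {1..n} \<Longrightarrow> l i > 0" and kr: "(\<Sum>i=1..n. 2 powr (- l i)) \<le> 1"
  shows "(\<Sum>i=1..n. p i * (l i)^2) / (2 * (\<Sum>i=1..n. p i * l i)) + (\<Sum>i=1..n. p i * l i)
          \<ge> 3/2 * (- (\<Sum>i=1..n. p i * ln (p i)) / ln 2)"
proof -
  define EL where "EL = (\<Sum>i=1..n. p i * l i)"
  define EL2 where "EL2 = (\<Sum>i=1..n. p i * (l i)^2)"
  have EL0: "EL > 0" unfolding EL_def using n p l by (intro sum_pos) auto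
  have g: "p i * (- l i * ln 2 - ln (p i)) \<le> 2 powr (- l i) - p i" if i: "i \<in> {1..n}" for i
  proof -
    have q0: "2 powr (- l i) / p i > 0" using p[OF i] by simp
    have "ln (2 powr (- l i) / p i) \<le> 2 powr (- l i) / p i - 1" using ln_le_minus_one[OF q0] .
    moreover have "ln (2 powr (- l i) / p i) = - l i * ln 2 - ln (p i)"
      using p[OF i] by (simp add: ln_div ln_powr)
    ultimately have "p i * (- l i * ln 2 - ln (p i)) \<le> p i * (2 powr (- l i) / p i - 1)"
      using p[OF i] by (simp add: mult_left_mono)
    also have "\<dots> = 2 powr (- l i) - p i" using p[OF i] by (simp add: field_simps)
    finally show ?thesis .
  qed
  have "(\<Sum>i=1..n. p i * (- l i * ln 2 - ln (p i))) \<le> (\<Sum>i=1..n. 2 powr (- l i) - p i)"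
    using g by (rule sum_mono)
  also have "\<dots> \<le> 0" using kr ps by (simp add: sum_subtractf)
  finally have "- ln 2 * EL - (\<Sum>i=1..n. p i * ln (p i)) \<le> 0"
    by (simp add: EL_def algebra_simps sum_subtractf sum_distrib_left sum_negf)
  then have "- (\<Sum>i=1..n. p i * ln (p i)) \<le> EL * ln 2" by (simp add: algebra_simps)
  then have H: "- (\<Sum>i=1..n. p i * ln (p i)) / ln 2 \<le> EL"
    using pos_divide_le_eq[of "ln 2" "- (\<Sum>i=1..n. p i * ln (p i))" EL] by simp
  have "0 \<le> (\<Sum>i=1..n. p i * (l i - EL)^2)"
    apply (intro sum_nonneg)
    subgoal for i using p[of i] by simp
    done
  also have "\<dots> = (\<Sum>i=1..n. p i * (l i)^2 - 2 * EL * (p i * l i) + EL^2 * p i)"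
    by (intro sum.cong) (simp_all add: power2_eq_square algebra_simps)
  also have "\<dots> = EL2 - 2 * EL * (\<Sum>i=1..n. p i * l i) + EL^2 * (\<Sum>i=1..n. p i)"
    by (simp add: EL2_def sum.distrib sum_subtractf sum_distrib_left)
  also have "\<dots> = EL2 - 2 * EL * EL + EL^2 * (\<Sum>i=1..n. p i)" by (simp add: EL_def)
  finally have "EL2 \<ge> EL^2" using ps by (simp add: power2_eq_square)
  then have "EL2 / (2 * EL) \<ge> EL^2 / (2 * EL)" using EL0 by (simp add: divide_right_mono)
  moreover have "EL^2 / (2 * EL) = EL / 2" using EL0 by (simp add: power2_eq_square)
  ultimately have "EL2 / (2 * EL) + EL \<ge> 3/2 * EL" by simp
  then show ?thesis using H unfolding EL_def[symmetric] EL2_def[symmetric] by linarith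
qed

lemma aoi_zw_nonneg:
  assumes "is_real_code Q l" "\<And>i. i \<in> {1..qcells Q} \<Longrightarrow> cell_prob f Q i \<ge> 0"
  shows "aoi_zw f Q l \<ge> 0"
proof -
  have "EL2 f Q l \<ge> 0" unfolding EL2_def using assms by (intro sum_nonneg) auto
  moreover have "EL f Q l \<ge> 0" unfolding EL_def using assms
    by (intro sum_nonneg) (auto simp: is_real_code_def less_imp_le)
  ultimately show ?thesis unfolding aoi_zw_def by simp
qed

context dens begin

lemma probs:
  assumes Q: "is_quantizer lo hi (n, a, c)"
  shows "\<And>i. i \<in> {1..n} \<Longrightarrow> cell_prob f (n, a, c) i > 0" "(\<Sum>i=1..n. cell_prob f (n, a, c) i) = 1" "n \<ge> 1"
  using cellfacts(3)[OF Q] sums(1)[OF Q] Q by (auto simp: unfold_q is_quantizer_def)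

lemma aoi_opt_lower:
  assumes Q: "is_quantizer lo hi (n, a, c)"
  shows "aoi_opt f (n, a, c) \<ge> 3/2 * (Ent (n, a, c) / ln 2)"
proof -
  note pr = probs[OF Q]
  define S where "S = {aoi_zw f (n, a, c) l | l. is_real_code (n, a, c) l}"
  define l0 where "l0 = (\<lambda>i::nat. log 2 (real n) + 1)"
  have "is_real_code (n, a, c) l0"
  proof -
    have n0: "real n > 0" using pr(3) by simp
    have lp: "log 2 (real n) \<ge> 0" using pr(3) by simp
    have e1: "2 powr (log 2 (real n) + 1) = real n * 2" using n0 by (simp add: powr_add)
    have e2: "2 powr (- (log 2 (real n) + 1)) = 1 / (real n * 2)"
      by (simp only: powr_minus_divide e1)
    have c: "\<And>i. 2 powr (- l0 i) = 1 / (real n * 2)" unfolding l0_def by (rule e2)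
    have "(\<Sum>i=1..n. 2 powr (- l0 i)) = (\<Sum>i=1..n. 1 / (real n * 2))" by (simp only: c)
    also have "\<dots> = real n * (1 / (real n * 2))" by simp
    also have "\<dots> \<le> 1" using n0 by simp
    finally have k: "(\<Sum>i=1..n. 2 powr (- l0 i)) \<le> 1" .
    have "\<forall>i\<in>{1..n}. l0 i > 0" using lp by (simp add: l0_def)
    then show ?thesis using k by (simp add: is_real_code_def unfold_q)
  qed
  then have ne: "S \<noteq> {}" unfolding S_def by blast
  have "x \<ge> 3/2 * (Ent (n, a, c) / ln 2)" if x: "x \<in> S" for x
  proof -
    obtain l where l: "is_real_code (n, a, c) l" "x = aoi_zw f (n, a, c) l" using x unfolding S_def by blast
    have "x = (\<Sum>i=1..n. cell_prob f (n, a, c) i * (l i)^2) / (2 * (\<Sum>i=1..n. cell_prob f (n, a, c) i * l i))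
              + (\<Sum>i=1..n. cell_prob f (n, a, c) i * l i)"
      using l by (simp add: aoi_zw_def EL_def EL2_def unfold_q)
    also have "\<dots> \<ge> 3/2 * (- (\<Sum>i=1..n. cell_prob f (n, a, c) i * ln (cell_prob f (n, a, c) i)) / ln 2)"
      using l(1) pr by (intro aoi_core) (auto simp: is_real_code_def unfold_q)
    finally show ?thesis by (simp add: Ent_def unfold_q)
  qed
  then have "Inf S \<ge> 3/2 * (Ent (n, a, c) / ln 2)" using ne by (intro cInf_greatest) auto
  then show ?thesis by (simp add: aoi_opt_def S_def)
qed

lemma aoi_opt_nonneg:
  assumes Q: "is_quantizer lo hi (n, a, c)"
  shows "aoi_opt f (n, a, c) \<ge> 0"
proof -
  have "Ent (n, a, c) \<ge> 0"
  proof -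
    note pr = probs[OF Q]
    have "cell_prob f (n, a, c) i \<le> 1" if "i \<in> {1..n}" for i
    proof -
      have "cell_prob f (n, a, c) i \<le> (\<Sum>j=1..n. cell_prob f (n, a, c) j)"
        using that pr(1) by (intro member_le_sum) (auto simp: less_imp_le)
      then show ?thesis using pr(2) by simp
    qed
    then have "cell_prob f (n, a, c) i * ln (cell_prob f (n, a, c) i) \<le> 0" if "i \<in> {1..n}" for i
      using pr(1)[OF that] that by (simp add: mult_nonneg_nonpos)
    then have "(\<Sum>i=1..n. cell_prob f (n, a, c) i * ln (cell_prob f (n, a, c) i)) \<le> 0"
      by (rule sum_nonpos)
    then show ?thesis unfolding Ent_def unfold_q by simp
  qed
  then have "3/2 * (Ent (n, a, c) / ln 2) \<ge> 0" by simp
  then show ?thesis using aoi_opt_lower[OF Q] by linarith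
qed

lemma aoi_opt_upper:
  assumes Q: "is_quantizer lo hi (n, a, c)" and p1: "\<And>i. i \<in> {1..n} \<Longrightarrow> cell_prob f (n, a, c) i < 1"
  shows "aoi_opt f (n, a, c) \<le> (\<Sum>i=1..n. cell_prob f (n, a, c) i * (ln (cell_prob f (n, a, c) i))^2)
            / (2 * ln 2 * Ent (n, a, c)) + Ent (n, a, c) / ln 2"
proof -
  note pr = probs[OF Q]
  have ln2_ne: "ln (2::real) \<noteq> 0" by simp
  define p where "p i = cell_prob f (n, a, c) i" for i
  define l where "l i = - ln (p i) / ln 2" for i
  have l0: "l i > 0" if "i \<in> {1..n}" for i
  proof -
    have "ln (p i) < 0" using pr(1)[OF that] p1[OF that] by (simp add: p_def)
    then show ?thesis by (simp add: l_def divide_less_0_iff)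
  qed
  have pw: "2 powr (- l i) = p i" if "i \<in> {1..n}" for i
  proof -
    have "2 powr (- l i) = exp (ln (p i))" by (simp add: l_def powr_def)
    then show ?thesis using pr(1)[OF that] by (simp add: p_def)
  qed
  have code: "is_real_code (n, a, c) l"
    using l0 pw pr(2) by (simp add: is_real_code_def unfold_q p_def)
  have ELv: "EL f (n, a, c) l = Ent (n, a, c) / ln 2"
    by (simp add: EL_def Ent_def unfold_q l_def p_def sum_divide_distrib sum_negf)
  have EL2v: "EL2 f (n, a, c) l = (\<Sum>i=1..n. p i * (ln (p i))^2) / (ln 2)^2"
    by (simp add: EL2_def unfold_q l_def p_def sum_divide_distrib power_divide)
  have "aoi_zw f (n, a, c) l = (\<Sum>i=1..n. p i * (ln (p i))^2) / (2 * ln 2 * Ent (n, a, c)) + Ent (n, a, c) / ln 2"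
  proof -
    have gen: "(W / c^2) / (2 * (E / c)) = W / (2 * c * E)" if "c \<noteq> 0" for W E c :: real
      using that by (cases "E = 0") (simp_all add: field_simps power2_eq_square)
    show ?thesis unfolding aoi_zw_def ELv EL2v gen[OF ln2_ne] by simp
  qed
  moreover have "aoi_opt f (n, a, c) \<le> aoi_zw f (n, a, c) l"
    unfolding aoi_opt_def
  proof (rule cInf_lower)
    show "aoi_zw f (n, a, c) l \<in> {aoi_zw f (n, a, c) l |l. is_real_code (n, a, c) l}" using code by blast
    show "bdd_below {aoi_zw f (n, a, c) l |l. is_real_code (n, a, c) l}"
    proof (rule bdd_belowI[of _ 0])
      fix x assume "x \<in> {aoi_zw f (n, a, c) l |l. is_real_code (n, a, c) l}"
      then obtain l' where "is_real_code (n, a, c) l'" "x = aoi_zw f (n, a, c) l'" by blast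
      moreover have "\<And>i. i \<in> {1..qcells (n, a, c)} \<Longrightarrow> cell_prob f (n, a, c) i \<ge> 0"
        using pr(1) by (simp add: unfold_q less_imp_le)
      ultimately show "0 \<le> x" using aoi_zw_nonneg by blast
    qed
  qed
  ultimately show ?thesis by (simp add: p_def)
qed

end

lemma qlnq_bound:
  fixes q M :: real assumes q: "q > 0" "q \<le> M" and M: "M \<ge> 1"
  shows "q * (ln q)^2 \<le> 4 + M^3"
proof (cases "q \<le> 1")
  case True
  define s where "s = sqrt q"
  have s0: "s > 0" using q by (simp add: s_def)
  have qs: "q = s^2" using q by (simp add: s_def)
  have lq: "ln q = 2 * ln s" using s0 by (simp add: qs ln_realpow)
  have "ln (1/s) \<le> 1/s - 1" using ln_le_minus_one[of "1/s"] s0 by simp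
  then have a: "- ln s \<le> 1/s" using s0 by (simp add: ln_div)
  have b: "ln q \<le> 0" using True q by simp
  have "(ln q)^2 = (- ln q)^2" by simp
  also have "\<dots> \<le> (2 / s)^2" using a b lq by (intro power_mono) auto
  finally have "q * (ln q)^2 \<le> s^2 * (2/s)^2" using q qs by (simp add: mult_left_mono)
  also have "\<dots> = 4" using s0 by (simp add: power_divide)
  moreover have "M^3 \<ge> 0" using M by simp
  ultimately show ?thesis by linarith
next
  case False
  then have q1: "q > 1" by simp
  have l0: "ln q \<ge> 0" using q1 by simp
  have "ln q \<le> q - 1" using ln_le_minus_one q by simp
  then have "(ln q)^2 \<le> q^2" using l0 q1 by (intro power_mono) auto
  then have "q * (ln q)^2 \<le> q * q^2" using q by (simp add: mult_left_mono)
  also have "\<dots> = q^3" by (simp add: power3_eq_cube power2_eq_square)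
  also have "\<dots> \<le> M^3" using q by (intro power_mono) auto
  finally show ?thesis by simp
qed

context dens begin

lemma dist_pos:
  assumes Q: "is_quantizer lo hi (n, a, c)"
  shows "distortion f (n, a, c) > 0"
proof -
  have n1: "n \<ge> 1" using Q by (simp add: is_quantizer_def)
  show ?thesis unfolding unfold_q
    using cellfacts(4)[OF Q] n1 by (intro sum_pos) auto
qed

lemma gap_raw:
  assumes Q: "is_quantizer lo hi (n, a, c)" and eps: "0 < \<epsilon>" "\<epsilon> \<le> 1/2" and eta: "\<eta> > 0"
    and uc: "\<And>x y. x \<in> {lo..hi} \<Longrightarrow> y \<in> {lo..hi} \<Longrightarrow> \<bar>x - y\<bar> \<le> \<eta> \<Longrightarrow> \<bar>f x - f y\<bar> \<le> \<epsilon>^2"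
    and fM: "\<And>x. x \<in> {lo..hi} \<Longrightarrow> f x \<le> M" and M: "M > 0" and r: "r > 0"
    and d: "0 < \<delta>" "\<delta> \<le> \<eta>"
    and DQ: "distortion f (n, a, c) \<le> distortion f (uniform_quantizer lo hi \<delta>)"
  shows "Ent (n, a, c) \<ge> Ent (uniform_quantizer lo hi \<delta>)
     - 3/2 * ln ((1 + \<epsilon>) / (1 - \<epsilon>)) - 2 * \<epsilon> / exp 1 * (hi - lo) - M * \<delta> / exp 1
     - ln ((1 + \<epsilon>) / (1 - \<epsilon>) + 2 * \<epsilon> * (hi - lo) + M * \<delta>) / 2
     - pi * (distortion f (uniform_quantizer lo hi \<delta>) / r^2 + (pi * M * r / \<eta> + 2 * \<epsilon>) * (hi - lo))"
proof -
  define \<rho> where "\<rho> = (1 + \<epsilon>) / (1 - \<epsilon>)"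
  define B where "B = \<rho> + 2 * \<epsilon> * (hi - lo) + M * \<delta>"
  define Du where "Du = distortion f (uniform_quantizer lo hi \<delta>)"
  define DQ' where "DQ' = distortion f (n, a, c)"
  have rho1: "\<rho> \<ge> 1" using eps by (simp add: \<rho>_def)
  have B0: "B > 0" using rho1 eps M d lohi by (simp add: B_def add_pos_nonneg)
  have Q0: "DQ' > 0" using dist_pos[OF Q] by (simp add: DQ'_def)
  have low: "Ent (n, a, c) \<ge> - EE - ln (12 * \<rho> * DQ') / 2 - pi * (DQ' / r^2 + (pi * M * r / \<eta> + 2 * \<epsilon>) * (hi - lo))"
    using Q_lower[OF Q eps eta uc fM r] by (simp add: \<rho>_def DQ'_def)
  have U1: "Ent (uniform_quantizer lo hi \<delta>) \<le> - EE - ln \<delta> + ln \<rho> + 2 * \<epsilon> / exp 1 * (hi - lo) + M * \<delta> / exp 1"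
    using U_upper(1)[OF d eps uc fM M] by (simp add: \<rho>_def)
  have U2: "Du \<le> \<delta>^2 / 12 * B"
    using U_upper(2)[OF d eps uc fM M] by (simp add: \<rho>_def Du_def B_def)
  have DQu: "DQ' \<le> Du" using DQ by (simp add: DQ'_def Du_def)
  have "ln (12 * \<rho> * DQ') \<le> ln (12 * \<rho> * (\<delta>^2 / 12 * B))"
  proof -
    have le: "12 * \<rho> * DQ' \<le> 12 * \<rho> * (\<delta>^2 / 12 * B)" using DQu U2 rho1 by simp
    have p1: "12 * \<rho> * DQ' > 0" using Q0 rho1 by simp
    then have p2: "12 * \<rho> * (\<delta>^2 / 12 * B) > 0" using le by linarith
    show ?thesis by (simp only: ln_le_cancel_iff[OF p1 p2] le)
  qed
  also have "ln (12 * \<rho> * (\<delta>^2 / 12 * B)) = ln \<rho> + 2 * ln \<delta> + ln B"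
    using rho1 d B0 by (simp add: ln_mult ln_realpow)
  finally have l1: "ln (12 * \<rho> * DQ') \<le> ln \<rho> + 2 * ln \<delta> + ln B" .
  have "DQ' / r^2 \<le> Du / r^2" using DQu r by (simp add: divide_right_mono)
  then have l2: "pi * (DQ' / r^2 + (pi * M * r / \<eta> + 2 * \<epsilon>) * (hi - lo)) \<le> pi * (Du / r^2 + (pi * M * r / \<eta> + 2 * \<epsilon>) * (hi - lo))"
    by simp
  show ?thesis using low U1 l1 l2 unfolding \<rho>_def[symmetric] B_def[symmetric] Du_def[symmetric] by linarith
qed


lemma gap_simple:
  assumes Q: "is_quantizer lo hi (n, a, c)" and eps: "0 < \<epsilon>" "\<epsilon> \<le> 1/2" and eta: "\<eta> > 0"
    and uc: "\<And>x y. x \<in> {lo..hi} \<Longrightarrow> y \<in> {lo..hi} \<Longrightarrow> \<bar>x - y\<bar> \<le> \<eta> \<Longrightarrow> \<bar>f x - f y\<bar> \<le> \<epsilon>^2"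
    and fM: "\<And>x. x \<in> {lo..hi} \<Longrightarrow> f x \<le> M" and M: "M > 0"
    and d: "0 < \<delta>" "\<delta> \<le> \<eta>" "\<delta> \<le> 1"
    and DQ: "distortion f (n, a, c) \<le> distortion f (uniform_quantizer lo hi \<delta>)"
  shows "Ent (n, a, c) \<ge> Ent (uniform_quantizer lo hi \<delta>)
     - (\<epsilon> * (12 + 11 * (hi - lo)) + \<delta> * (3/2 * M)
        + \<delta>^2 * (pi * (3 + (hi - lo) + M) * (pi * M * (hi - lo) / (\<epsilon> * \<eta>))^2))"
proof -
  define L where "L = hi - lo"
  have L0: "L > 0" using lohi by (simp add: L_def)
  define r where "r = \<epsilon> * \<eta> / (pi * M * L)"
  have r0: "r > 0" using eps eta M L0 by (simp add: r_def)
  define \<rho> where "\<rho> = (1 + \<epsilon>) / (1 - \<epsilon>)"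
  define B where "B = \<rho> + 2 * \<epsilon> * L + M * \<delta>"
  define Du where "Du = distortion f (uniform_quantizer lo hi \<delta>)"
  have raw: "Ent (n, a, c) \<ge> Ent (uniform_quantizer lo hi \<delta>)
     - 3/2 * ln \<rho> - 2 * \<epsilon> / exp 1 * L - M * \<delta> / exp 1 - ln B / 2
     - pi * (Du / r^2 + (pi * M * r / \<eta> + 2 * \<epsilon>) * L)"
    using gap_raw[OF Q eps eta uc fM M r0 d(1,2) DQ] by (simp add: \<rho>_def B_def Du_def L_def)
  have rho1: "\<rho> \<ge> 1" using eps by (simp add: \<rho>_def)
  have rhom: "\<rho> - 1 \<le> 4 * \<epsilon>"
  proof -
    have "\<rho> - 1 = 2 * \<epsilon> / (1 - \<epsilon>)" using eps by (simp add: \<rho>_def field_simps)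
    also have "\<dots> \<le> 4 * \<epsilon>" using eps by (simp add: divide_le_eq algebra_simps)
    finally show ?thesis .
  qed
  have lr: "ln \<rho> \<le> 4 * \<epsilon>" using ln_le_minus_one[of \<rho>] rho1 rhom by simp
  have B0: "B > 0" using rho1 eps M d L0 by (simp add: B_def add_pos_nonneg)
  have lB: "ln B \<le> 4 * \<epsilon> + 2 * \<epsilon> * L + M * \<delta>" using ln_le_minus_one[OF B0] rhom by (simp add: B_def)
  have e1: "1 / exp (1::real) \<le> 1" by simp
  have t1: "2 * \<epsilon> / exp 1 * L \<le> 2 * \<epsilon> * L"
  proof -
    have "2 * \<epsilon> * L / exp 1 \<le> 2 * \<epsilon> * L" using eps L0 by (simp add: divide_le_eq)
    then show ?thesis by simp
  qed
  have t2: "M * \<delta> / exp 1 \<le> M * \<delta>" using M d by (simp add: divide_le_eq)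
  have t3: "pi * M * r / \<eta> * L = \<epsilon>" using eta M L0 eps by (simp add: r_def field_simps)
  have "Du \<le> \<delta>^2 / 12 * B"
    using U_upper(2)[OF d(1,2) eps uc fM M] by (simp add: \<rho>_def Du_def B_def L_def)
  also have "B \<le> 3 + L + M"
  proof -
    have "\<rho> \<le> 3" using rhom eps by simp
    moreover have "2 * \<epsilon> * L \<le> L" using eps L0 by (simp add: mult_left_le_one_le)
    moreover have "M * \<delta> \<le> M" using M d by (simp add: mult_left_le)
    ultimately show ?thesis by (simp add: B_def)
  qed
  then have "\<delta>^2 / 12 * B \<le> \<delta>^2 / 12 * (3 + L + M)" by (simp add: mult_left_mono)
  also have "\<dots> \<le> \<delta>^2 * (3 + L + M)" using L0 M by simp
  finally have Du1: "Du \<le> \<delta>^2 * (3 + L + M)" .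
  have "Du / r^2 \<le> \<delta>^2 * (3 + L + M) / r^2" using Du1 r0 by (simp add: divide_right_mono)
  also have "\<delta>^2 * (3 + L + M) / r^2 = \<delta>^2 * (3 + L + M) * (pi * M * L / (\<epsilon> * \<eta>))^2"
    using eps eta M L0 by (simp add: r_def power_divide field_simps)
  finally have "pi * (Du / r^2) \<le> pi * (\<delta>^2 * (3 + L + M) * (pi * M * L / (\<epsilon> * \<eta>))^2)"
    by (rule mult_left_mono) simp
  then have Du2: "pi * (Du / r^2) \<le> \<delta>^2 * (pi * (3 + L + M) * (pi * M * L / (\<epsilon> * \<eta>))^2)"
    by (simp add: algebra_simps)
  have "pi * ((pi * M * r / \<eta> + 2 * \<epsilon>) * L) = pi * (\<epsilon> + 2 * \<epsilon> * L)"
    using t3 by (simp add: algebra_simps)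
  also have "\<dots> \<le> 4 * (\<epsilon> + 2 * \<epsilon> * L)" using pi_less_4 eps L0
    by (intro mult_right_mono) (auto simp: add_pos_nonneg less_imp_le)
  finally have t4: "pi * ((pi * M * r / \<eta> + 2 * \<epsilon>) * L) \<le> 4 * (\<epsilon> + 2 * \<epsilon> * L)" .
  have "pi * (Du / r^2 + (pi * M * r / \<eta> + 2 * \<epsilon>) * L) = pi * (Du / r^2) + pi * ((pi * M * r / \<eta> + 2 * \<epsilon>) * L)"
    by (simp add: algebra_simps)
  then show ?thesis using raw lr lB t1 t2 Du2 t4 unfolding L_def[symmetric] by (simp add: algebra_simps; linarith)
qed


lemma uq_var:
  assumes d: "0 < \<delta>" and fM: "\<And>x. x \<in> {lo..hi} \<Longrightarrow> f x \<le> M" and M: "M \<ge> 1"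
    and Qe: "uniform_quantizer lo hi \<delta> = (n, a, c)"
  shows "is_quantizer lo hi (n, a, c)"
    "\<And>i. i \<in> {1..n} \<Longrightarrow> cell_prob f (n, a, c) i \<le> M * \<delta>"
    "Ent (n, a, c) \<ge> - ln (M * \<delta>)"
    "(\<Sum>i=1..n. cell_prob f (n, a, c) i * (ln (cell_prob f (n, a, c) i))^2) - (Ent (n, a, c))^2
       \<le> (hi - lo + \<delta>) * (4 + M^3)"
proof -
  have n_def: "n = nat \<lceil>(hi - lo) / \<delta>\<rceil>" and a_def: "a = (\<lambda>i. min (lo + real i * \<delta>) hi)"
    using Qe by (simp_all add: uq_unfold)
  note UF = uq_facts(2,3,4)[OF lohi d, folded n_def a_def]
  show Q: "is_quantizer lo hi (n, a, c)" unfolding n_def a_def by (rule uq_facts(1)[OF lohi d])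
  note pr = probs[OF Q]
  define p where "p i = cell_prob f (n, a, c) i" for i
  have len: "a i - a (i - 1) \<le> \<delta>" if i: "i \<in> {1..n}" for i
    using UF(2)[OF i] UF(3) i by (cases "i < n") (auto simp: a_def)
  show pM: "\<And>i. i \<in> {1..n} \<Longrightarrow> cell_prob f (n, a, c) i \<le> M * \<delta>"
  proof -
    fix i assume i: "i \<in> {1..n}"
    note cf = cellfacts(1,2,5)[OF Q i]
    have "integral {a (i - 1)..a i} f \<le> M * (a i - a (i - 1))"
      using int_const_le[OF _ integrable_continuous_real[OF cf(2)], of M] cf fM by auto
    also have "\<dots> \<le> M * \<delta>" using len[OF i] M by (simp add: mult_left_mono)
    finally show "cell_prob f (n, a, c) i \<le> M * \<delta>" by (simp add: unfold_q)
  qed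
  have Md0: "M * \<delta> > 0" using M d by simp
  have "(\<Sum>i=1..n. p i * ln (p i)) \<le> (\<Sum>i=1..n. p i * ln (M * \<delta>))"
  proof (rule sum_mono)
    fix i assume i: "i \<in> {1..n}"
    have "ln (p i) \<le> ln (M * \<delta>)" using pM[OF i] pr(1)[OF i] Md0 by (simp add: p_def)
    then show "p i * ln (p i) \<le> p i * ln (M * \<delta>)" using pr(1)[OF i] by (simp add: p_def mult_left_mono)
  qed
  also have "\<dots> = ln (M * \<delta>)" using pr(2) by (simp add: p_def sum_distrib_right[symmetric])
  finally show "Ent (n, a, c) \<ge> - ln (M * \<delta>)" by (simp add: Ent_def unfold_q p_def)
  define W where "W = (\<Sum>i=1..n. p i * (ln (p i))^2)"
  define Hn where "Hn = Ent (n, a, c)"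
  have Hn_eq: "(\<Sum>i=1..n. p i * ln (p i)) = - Hn" by (simp add: Hn_def Ent_def unfold_q p_def)
  define t where "t = ln \<delta>"
  have "(\<Sum>i=1..n. p i * (ln (p i) - t)^2) = (\<Sum>i=1..n. p i * (ln (p i))^2 - 2 * t * (p i * ln (p i)) + t^2 * p i)"
    by (intro sum.cong) (simp_all add: power2_eq_square algebra_simps)
  also have "\<dots> = W - 2 * t * (\<Sum>i=1..n. p i * ln (p i)) + t^2 * (\<Sum>i=1..n. p i)"
    by (simp add: W_def sum.distrib sum_subtractf sum_distrib_left)
  also have "\<dots> = W + 2 * t * Hn + t^2" using pr(2) Hn_eq by (simp add: p_def)
  finally have E1: "(\<Sum>i=1..n. p i * (ln (p i) - t)^2) = W + 2 * t * Hn + t^2" .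
  have E2: "W - Hn^2 \<le> W + 2 * t * Hn + t^2"
  proof -
    have "0 \<le> (Hn + t)^2" by simp
    then show ?thesis by (simp add: power2_eq_square algebra_simps)
  qed
  have cellv: "p i * (ln (p i) - t)^2 \<le> \<delta> * (4 + M^3)" if i: "i \<in> {1..n}" for i
  proof -
    define q where "q = p i / \<delta>"
    have q0: "q > 0" using pr(1)[OF i] d by (simp add: q_def p_def)
    have qM: "q \<le> M" using pM[OF i] d by (simp add: q_def p_def pos_divide_le_eq)
    have "ln (p i) - t = ln q" using pr(1)[OF i] d by (simp add: q_def t_def p_def ln_div)
    moreover have "p i = \<delta> * q" using d by (simp add: q_def)
    ultimately have "p i * (ln (p i) - t)^2 = \<delta> * (q * (ln q)^2)" by simp
    also have "\<dots> \<le> \<delta> * (4 + M^3)" using qlnq_bound[OF q0 qM M] d by (simp add: mult_left_mono)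
    finally show ?thesis .
  qed
  have "(\<Sum>i=1..n. p i * (ln (p i) - t)^2) \<le> (\<Sum>i=1..n. \<delta> * (4 + M^3))"
    using cellv by (rule sum_mono)
  also have "\<dots> = real n * \<delta> * (4 + M^3)" by simp
  also have "\<dots> \<le> (hi - lo + \<delta>) * (4 + M^3)"
  proof -
    have "real (n - 1) * \<delta> < hi - lo" using uq_n(2)[OF lohi d] by (simp add: n_def)
    moreover have "real (n - 1) = real n - 1" using pr(3) by simp
    ultimately have "real n * \<delta> \<le> hi - lo + \<delta>" by (simp add: algebra_simps)
    moreover have "4 + M^3 \<ge> 0" using M by simp
    ultimately show ?thesis by (simp add: mult_right_mono)
  qed
  finally show "(\<Sum>i=1..n. cell_prob f (n, a, c) i * (ln (cell_prob f (n, a, c) i))^2) - (Ent (n, a, c))^2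
       \<le> (hi - lo + \<delta>) * (4 + M^3)"
    using E1 E2 by (simp add: W_def Hn_def p_def)
qed


lemma g_bound:
  assumes M: "M \<ge> 1" and fM: "\<And>x. x \<in> {lo..hi} \<Longrightarrow> f x \<le> M"
    and eps: "0 < \<epsilon>" "\<epsilon> \<le> 1/2" and eta: "\<eta> > 0"
    and uc: "\<And>x y. x \<in> {lo..hi} \<Longrightarrow> y \<in> {lo..hi} \<Longrightarrow> \<bar>x - y\<bar> \<le> \<eta> \<Longrightarrow> \<bar>f x - f y\<bar> \<le> \<epsilon>^2"
    and d: "0 < \<delta>" "\<delta> \<le> \<eta>" "\<delta> \<le> 1" and Md: "M * \<delta> < 1"
  defines "g \<equiv> aoi_opt f (uniform_quantizer lo hi \<delta>)
            - Inf {aoi_opt f Q | Q. is_quantizer lo hi Q \<and>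
                     distortion f Q \<le> distortion f (uniform_quantizer lo hi \<delta>)}"
    and "\<tau> \<equiv> \<epsilon> * (12 + 11 * (hi - lo)) + \<delta> * (3/2 * M)
        + \<delta>^2 * (pi * (3 + (hi - lo) + M) * (pi * M * (hi - lo) / (\<epsilon> * \<eta>))^2)"
  shows "0 \<le> g" "g \<le> (hi - lo + \<delta>) * (4 + M^3) / (2 * ln 2 * Ent (uniform_quantizer lo hi \<delta>)) + 3/2 * \<tau> / ln 2"
    "Ent (uniform_quantizer lo hi \<delta>) \<ge> - ln (M * \<delta>)"
proof -
  obtain n a c where Qeq: "uniform_quantizer lo hi \<delta> = (n, a, c)" by (metis prod_cases3)
  have M0: "M > 0" using M by simp
  note UV = uq_var[OF d(1) fM M Qeq]
  note Q = UV(1)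
  define Hn where "Hn = Ent (n, a, c)"
  have Hlow: "Hn \<ge> - ln (M * \<delta>)" using UV(3) by (simp add: Hn_def)
  then show "Ent (uniform_quantizer lo hi \<delta>) \<ge> - ln (M * \<delta>)" by (simp add: Qeq Hn_def)
  have "ln (M * \<delta>) < 0" using Md M0 d by simp
  then have Hpos: "Hn > 0" using Hlow by linarith
  have p1: "\<And>i. i \<in> {1..n} \<Longrightarrow> cell_prob f (n, a, c) i < 1" using UV(2) Md by (meson le_less_trans)
  define W where "W = (\<Sum>i=1..n. cell_prob f (n, a, c) i * (ln (cell_prob f (n, a, c) i))^2)"
  have up: "aoi_opt f (n, a, c) \<le> W / (2 * ln 2 * Hn) + Hn / ln 2"
    using aoi_opt_upper[OF Q p1] by (simp add: W_def Hn_def)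
  have Wb: "W - Hn^2 \<le> (hi - lo + \<delta>) * (4 + M^3)" using UV(4) by (simp add: W_def Hn_def)
  define S where "S = {aoi_opt f Q | Q. is_quantizer lo hi Q \<and> distortion f Q \<le> distortion f (uniform_quantizer lo hi \<delta>)}"
  have inS: "aoi_opt f (n, a, c) \<in> S" unfolding S_def using Q Qeq by auto
  have bdd: "bdd_below S"
  proof (rule bdd_belowI[of _ 0])
    fix x assume "x \<in> S"
    then obtain Q' where Q': "is_quantizer lo hi Q'" "x = aoi_opt f Q'" unfolding S_def by blast
    obtain n' a' c' where "Q' = (n', a', c')" by (cases Q') auto
    then show "0 \<le> x" using aoi_opt_nonneg Q' by simp
  qed
  have "Inf S \<le> aoi_opt f (n, a, c)" using inS bdd by (rule cInf_lower)
  then show "0 \<le> g" unfolding g_def S_def[symmetric] unfolding Qeq by simp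
  have lowS: "x \<ge> 3/2 * ((Hn - \<tau>) / ln 2)" if x: "x \<in> S" for x
  proof -
    obtain Q' where Q': "is_quantizer lo hi Q'" "x = aoi_opt f Q'"
      and DQ: "distortion f Q' \<le> distortion f (uniform_quantizer lo hi \<delta>)" using x unfolding S_def by blast
    obtain n' a' c' where Qd: "Q' = (n', a', c')" by (cases Q') auto
    have "Ent (n', a', c') \<ge> Hn - \<tau>"
      using gap_simple[OF Q'(1)[unfolded Qd] eps eta uc fM M0 d DQ[unfolded Qd]]
      by (simp add: Hn_def Qeq \<tau>_def)
    moreover have "x \<ge> 3/2 * (Ent (n', a', c') / ln 2)" using aoi_opt_lower Q' Qd by simp
    moreover have "(Hn - \<tau>) / ln 2 \<le> Ent (n', a', c') / ln 2"
      using calculation(1) by (intro divide_right_mono) auto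
    ultimately show ?thesis by linarith
  qed
  have "Inf S \<ge> 3/2 * ((Hn - \<tau>) / ln 2)" using inS lowS by (intro cInf_greatest) auto
  then have "g \<le> W / (2 * ln 2 * Hn) + Hn / ln 2 - 3/2 * ((Hn - \<tau>) / ln 2)"
    unfolding g_def S_def[symmetric] unfolding Qeq using up by linarith
  also have "W / (2 * ln 2 * Hn) + Hn / ln 2 - 3/2 * ((Hn - \<tau>) / ln 2) = (W - Hn^2) / (2 * ln 2 * Hn) + 3/2 * \<tau> / ln 2"
  proof -
    have l2: "ln (2::real) > 0" by simp
    have "Hn / ln 2 - 3/2 * ((Hn - \<tau>) / ln 2) = - (Hn / (2 * ln 2)) + 3/2 * \<tau> / ln 2"
      by (simp add: diff_divide_distrib add_divide_distrib algebra_simps)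
    moreover have "W / (2 * ln 2 * Hn) - Hn / (2 * ln 2) = (W - Hn^2) / (2 * ln 2 * Hn)"
      using Hpos l2 by (simp add: diff_divide_distrib power2_eq_square)
    ultimately show ?thesis by linarith
  qed
  also have "(W - Hn^2) / (2 * ln 2 * Hn) \<le> (hi - lo + \<delta>) * (4 + M^3) / (2 * ln 2 * Hn)"
    using Wb Hpos by (intro divide_right_mono) auto
  finally show "g \<le> (hi - lo + \<delta>) * (4 + M^3) / (2 * ln 2 * Ent (uniform_quantizer lo hi \<delta>)) + 3/2 * \<tau> / ln 2"
    by (simp add: Qeq Hn_def)
qed


lemma ln2_half: "ln (2::real) \<ge> 1/2"
proof -
  have "ln (1/2::real) \<le> 1/2 - 1" using ln_le_minus_one[of "1/2::real"] by simp
  then show ?thesis by (simp add: ln_div)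
qed

lemma main_limit:
  "((\<lambda>\<delta>. aoi_opt f (uniform_quantizer lo hi \<delta>)
            - Inf {aoi_opt f Q | Q. is_quantizer lo hi Q \<and>
                     distortion f Q \<le> distortion f (uniform_quantizer lo hi \<delta>)})
          \<longlongrightarrow> 0) (at_right 0)"
proof -
  have "bounded (f ` {lo..hi})" using compact_continuous_image[OF cont compact_Icc] by (rule compact_imp_bounded)
  then obtain B where B: "\<And>x. x \<in> {lo..hi} \<Longrightarrow> \<bar>f x\<bar> \<le> B" unfolding bounded_real by blast
  define M where "M = max 1 B"
  have M: "M \<ge> 1" by (simp add: M_def)
  have fM: "\<And>x. x \<in> {lo..hi} \<Longrightarrow> f x \<le> M" using B by (force simp: M_def)
  have M0: "M > 0" using M by simp
  have ucf: "uniformly_continuous_on {lo..hi} f" using cont compact_Icc by (rule compact_uniformly_continuous)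
  show ?thesis unfolding tendsto_iff
  proof (intro allI impI)
    fix e0 :: real assume e0: "e0 > 0"
    define L where "L = hi - lo"
    have L0: "L > 0" using lohi by (simp add: L_def)
    define C1 where "C1 = 12 + 11 * L"
    have C1: "C1 > 0" using L0 by (simp add: C1_def)
    define \<epsilon> where "\<epsilon> = min (1/2) (e0 / (12 * C1))"
    have eps: "0 < \<epsilon>" "\<epsilon> \<le> 1/2" using e0 C1 by (auto simp: \<epsilon>_def)
    have epsC: "\<epsilon> * C1 \<le> e0 / 12"
    proof -
      have "\<epsilon> \<le> e0 / (12 * C1)" by (simp add: \<epsilon>_def)
      then have "\<epsilon> * C1 \<le> e0 / (12 * C1) * C1" using C1 by (intro mult_right_mono) auto
      also have "e0 / (12 * C1) * C1 = e0 / 12" using C1 by simp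
      finally show ?thesis .
    qed
    have "\<epsilon>^2 > 0" using eps by simp
    then obtain d0 where d0: "d0 > 0"
      and d0p: "\<And>x y. x \<in> {lo..hi} \<Longrightarrow> y \<in> {lo..hi} \<Longrightarrow> dist y x < d0 \<Longrightarrow> dist (f y) (f x) < \<epsilon>^2"
      using ucf unfolding uniformly_continuous_on_def by metis
    define \<eta> where "\<eta> = d0 / 2"
    have eta: "\<eta> > 0" using d0 by (simp add: \<eta>_def)
    have uc: "\<bar>f x - f y\<bar> \<le> \<epsilon>^2" if "x \<in> {lo..hi}" "y \<in> {lo..hi}" "\<bar>x - y\<bar> \<le> \<eta>" for x y
    proof -
      have "dist x y < d0" using that d0 by (simp add: dist_real_def \<eta>_def)
      then have "dist (f x) (f y) < \<epsilon>^2" using d0p[of y x] that by simp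
      then show ?thesis by (simp add: dist_real_def)
    qed
    define C3 where "C3 = pi * (3 + L + M) * (pi * M * L / (\<epsilon> * \<eta>))^2"
    have C3: "C3 > 0" using L0 M0 eps eta by (simp add: C3_def)
    define CV where "CV = (L + 1) * (4 + M^3)"
    have CV: "CV > 0" using L0 M0 by (simp add: CV_def add_pos_nonneg)
    define T where "T = CV / (ln 2 * e0)"
    have T0: "T > 0" using CV e0 by (simp add: T_def)
    define \<delta>0 where "\<delta>0 = min (min \<eta> 1) (min (e0 / (36 * M)) (min (e0 / (24 * C3)) (exp (- T) / M)))"
    have d00: "\<delta>0 > 0" using eta e0 M0 C3 by (simp add: \<delta>0_def)
    show "\<forall>\<^sub>F \<delta> in at_right 0. dist (aoi_opt f (uniform_quantizer lo hi \<delta>)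
            - Inf {aoi_opt f Q | Q. is_quantizer lo hi Q \<and>
                     distortion f Q \<le> distortion f (uniform_quantizer lo hi \<delta>)}) 0 < e0"
      unfolding eventually_at_right_field
    proof (intro exI[of _ \<delta>0] conjI allI impI)
      show "0 < \<delta>0" by (rule d00)
      fix \<delta> :: real assume dpos: "0 < \<delta>" and dlt: "\<delta> < \<delta>0"
      have d1: "\<delta> \<le> \<eta>" "\<delta> \<le> 1" using dlt by (auto simp: \<delta>0_def)
      have d2: "\<delta> \<le> e0 / (36 * M)" "\<delta> \<le> e0 / (24 * C3)" "\<delta> < exp (- T) / M"
        using dlt by (auto simp: \<delta>0_def)
      have MdT: "M * \<delta> < exp (- T)" using d2(3) M0 by (simp add: pos_less_divide_eq mult.commute)
      have "exp (- T) \<le> 1" using T0 by simp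
      then have Md: "M * \<delta> < 1" using MdT by linarith
      define g where "g = aoi_opt f (uniform_quantizer lo hi \<delta>)
            - Inf {aoi_opt f Q | Q. is_quantizer lo hi Q \<and>
                     distortion f Q \<le> distortion f (uniform_quantizer lo hi \<delta>)}"
      define \<tau> where "\<tau> = \<epsilon> * (12 + 11 * (hi - lo)) + \<delta> * (3/2 * M)
        + \<delta>^2 * (pi * (3 + (hi - lo) + M) * (pi * M * (hi - lo) / (\<epsilon> * \<eta>))^2)"
      define Hn where "Hn = Ent (uniform_quantizer lo hi \<delta>)"
      note GB = g_bound[OF M fM eps eta uc dpos d1 Md, folded g_def \<tau>_def Hn_def]
      have g0: "0 \<le> g" using GB(1) by (simp add: g_def)
      have gle: "g \<le> (hi - lo + \<delta>) * (4 + M^3) / (2 * ln 2 * Hn) + 3/2 * \<tau> / ln 2"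
        using GB(2) by (simp add: g_def \<tau>_def Hn_def)
      have Hlow: "Hn \<ge> - ln (M * \<delta>)" using GB(3) by (simp add: Hn_def)
      have "ln (M * \<delta>) < - T" using MdT M0 dpos by (metis ln_exp ln_less_cancel_iff exp_gt_zero mult_pos_pos)
      then have HT: "Hn > T" using Hlow by linarith
      have l2: "ln (2::real) > 0" by simp
      have t1: "(hi - lo + \<delta>) * (4 + M^3) / (2 * ln 2 * Hn) < e0 / 2"
      proof -
        have "(hi - lo + \<delta>) * (4 + M^3) \<le> CV" unfolding CV_def L_def using d1 M0
          by (intro mult_right_mono) (auto simp: add_pos_nonneg less_imp_le)
        then have "(hi - lo + \<delta>) * (4 + M^3) / (2 * ln 2 * Hn) \<le> CV / (2 * ln 2 * Hn)"
          using HT T0 l2 by (intro divide_right_mono) auto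
        also have "CV / (2 * ln 2 * Hn) < CV / (2 * ln 2 * T)"
          using HT T0 l2 CV by (intro divide_strict_left_mono) auto
        also have "CV / (2 * ln 2 * T) = e0 / 2" using CV e0 l2 by (simp add: T_def field_simps)
        finally show ?thesis .
      qed
      have tau: "\<tau> \<le> e0 / 6"
      proof -
        have a1: "\<epsilon> * (12 + 11 * (hi - lo)) \<le> e0 / 12" using epsC by (simp add: C1_def L_def)
        have "\<delta> * (3/2 * M) \<le> e0 / (36 * M) * (3/2 * M)" using d2(1) M0 by (intro mult_right_mono) auto
        also have "\<dots> = e0 / 24" using M0 by (simp add: field_simps)
        finally have a2: "\<delta> * (3/2 * M) \<le> e0 / 24" .
        have "\<delta>^2 \<le> \<delta>" using dpos d1 by (simp add: power2_eq_square mult_left_le_one_le)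
        then have "\<delta>^2 * C3 \<le> \<delta> * C3" using C3 by (simp add: mult_right_mono)
        also have "\<delta> * C3 \<le> e0 / (24 * C3) * C3" using d2(2) C3 by (intro mult_right_mono) auto
        also have "\<dots> = e0 / 24" using C3 by simp
        finally have a3: "\<delta>^2 * C3 \<le> e0 / 24" .
        show ?thesis using a1 a2 a3 unfolding \<tau>_def C3_def L_def by linarith
      qed
      have tau0: "\<tau> \<ge> 0" using eps dpos M0 L0 C3 unfolding \<tau>_def C3_def[symmetric] L_def[symmetric]
        by (intro add_nonneg_nonneg) auto
      have "3/2 * \<tau> / ln 2 \<le> 3 * \<tau>"
      proof -
        have "3 * \<tau> * (1/2) \<le> 3 * \<tau> * ln 2" using ln2_half tau0 by (intro mult_left_mono) auto
        then have "3/2 * \<tau> \<le> 3 * \<tau> * ln 2" by simp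
        then show ?thesis using l2 by (simp add: pos_divide_le_eq)
      qed
      then have "g < e0" using gle t1 tau by linarith
      then show "dist g 0 < e0" using g0 by simp
    qed
  qed
qed

end

theorem theorem3:
  fixes f :: "real \<Rightarrow> real" and lo hi :: real
  assumes lohi: "lo < hi"
    and nonneg: "\<And>x. f x \<ge> 0"
    and pdf: "(f has_integral 1) UNIV"
    and supp_out: "\<And>x. x \<notin> {lo..hi} \<Longrightarrow> f x = 0"
    and supp: "closure {x. f x \<noteq> 0} = {lo..hi}"
    and cont: "continuous_on {lo..hi} f"
    and diff: "\<And>x. x \<in> {lo..hi} \<Longrightarrow> f differentiable (at x within {lo..hi})"
    and condB1: "set_integrable lborel {lo..hi} (\<lambda>x. f x * (log 2 (f x))^2)"
    and condB2: "set_integrable lborel {lo..hi} (\<lambda>x. f x * log 2 (f x))"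
  shows "((\<lambda>\<delta>. aoi_opt f (uniform_quantizer lo hi \<delta>)
            - Inf {aoi_opt f Q | Q. is_quantizer lo hi Q \<and>
                     distortion f Q \<le> distortion f (uniform_quantizer lo hi \<delta>)})
          \<longlongrightarrow> 0) (at_right 0)"
proof -
  have int1: "integral {lo..hi} f = 1"
  proof -
    have "(\<lambda>x. if x \<in> {lo..hi} then f x else 0) = f" using supp_out by auto
    then have "(f has_integral 1) {lo..hi}" using pdf has_integral_restrict_UNIV[of "{lo..hi}" f 1] by simp
    then show ?thesis by (rule integral_unique)
  qed
  interpret dens f lo hi using lohi nonneg supp cont int1 by unfold_locales
  show ?thesis by (rule main_limit)
qed

end
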